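(* Let $\gamma,\kappa\ge2$, memory $m\ge0$, coupling length $L\ge m+1$ and lifting degree $Z\ge1$; use uniform random edge-spreading over $\{0,\ldots,m\}$ and uniform random lifting on the $\gamma\times\kappa$ fully-connected base graph. Let $\Delta=(2\gamma-3)(2\kappa-3)$, $I=\frac{(\Delta-1)^{\Delta-1}}{\Delta^{\Delta}}$, $II=\frac{27}{256(\gamma\kappa-\gamma-\kappa)}$, and suppose $\frac{2m^2+4m+3}{3(m+1)^3Z}\le\max\{I,II\}$. Then the Moser–Tardos algorithm (described in the context), run on the events "$c$ is active", $c\in\mathcal{C}_4$, terminates with probability one and outputs a QC-SC-LDPC code with no active 4-cycle candidate, and the expected numbers $\mathbb{E}[c_i]$ of times each event $c_i$ is resampled by RESAMPLE satisfy $$\sum_{c_i\in\mathcal{C}_4}\mathbb{E}[c_i]\le\begin{cases}\frac{\binom{\gamma}{2}\binom{\kappa}{2}}{(2\gamma-3)(2\kappa-3)-2}, & \text{if } I>II,\\[2pt] \frac{\binom{\gamma}{2}\binom{\kappa}{2}}{3(\gamma\kappa-\gamma-\kappa)-1}, & \text{otherwise.}\end{cases}$$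
   Context: The base graph has check nodes $[\gamma]$, variable nodes $[\kappa]$, edges $[\gamma]\times[\kappa]$ (all-one base matrix). The code is given by a partition matrix $\mathbf{P}\in\{0,\ldots,m\}^{\gamma\times\kappa}$ (edge $(i,j)$ placed in component matrix $\mathbf{H}_{\mathbf{P}(i,j)}$) and lifting matrix $\mathbf{L}\in\{0,\ldots,Z-1\}^{\gamma\times\kappa}$ (entry replaced by circulant $\sigma^{\mathbf{L}(i,j)}$); randomly all entries are independent, $\mathbf{P}$ entries uniform on $\{0,\ldots,m\}$, $\mathbf{L}$ entries uniform on $\{0,\ldots,Z-1\}$. Each edge $e$ carries variable $X_e=(\mathbf{P}(e),\mathbf{L}(e))$. $\mathcal{C}_4$ (ordered in a fixed way) is the set of 4-cycle candidates $(j_1,i_1,j_2,i_2)$, $i_1\ne i_2$, $j_1\ne j_2$, whose edge set $\mathrm{sc}(c)$ is $\{(i_1,j_1),(i_1,j_2),(i_2,j_1),(i_2,j_2)\}$; $c$ is active iff $\mathbf{P}(i_1,j_1)+\mathbf{P}(i_2,j_2)=\mathbf{P}(i_1,j_2)+\mathbf{P}(i_2,j_1)$ and $\mathbf{L}(i_1,j_1)+\mathbf{L}(i_2,j_2)\equiv\mathbf{L}(i_1,j_2)+\mathbf{L}(i_2,j_1)\pmod Z$. Moser–Tardos algorithm: sample all variables; while some event is active, call RESAMPLE on the least-indexed active one; output the assignment. RESAMPLE$(c)$: resample the variables in $\mathrm{sc}(c)$; then while there is a least-indexed active $c'$ with $\mathrm{sc}(c)\cap\mathrm{sc}(c')\ne\emptyset$,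 call RESAMPLE$(c')$. *)

theory Defs
  imports "HOL-Probability.Probability"
begin

(* An edge of the all-one gamma x kappa base graph: (row i, column j). *)
type_synonym edge = "nat \<times> nat"
(* The value X_e = (P(e), L(e)) carried by an edge. *)
type_synonym val = "nat \<times> nat"
type_synonym cand = "nat \<times> nat \<times> nat \<times> nat"

(* C_4: each 4-cycle of the base graph represented once (i1 < i2, j1 < j2). *)
definition C4 :: "nat \<Rightarrow> nat \<Rightarrow> cand set" where
  "C4 \<gamma> \<kappa> = {(j1, i1, j2, i2). i1 < i2 \<and> i2 < \<gamma> \<and> j1 < j2 \<and> j2 < \<kappa>}"

definition sc :: "cand \<Rightarrow> edge set" where
  "sc c = (case c of (j1, i1, j2, i2) \<Rightarrow> {(i1, j1), (i1, j2), (i2, j1), (i2, j2)})"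

definition active :: "nat \<Rightarrow> (edge \<Rightarrow> val) \<Rightarrow> cand \<Rightarrow> bool" where
  "active Z X c = (case c of (j1, i1, j2, i2) \<Rightarrow>
      fst (X (i1, j1)) + fst (X (i2, j2)) = fst (X (i1, j2)) + fst (X (i2, j1)) \<and>
      (snd (X (i1, j1)) + snd (X (i2, j2))) mod Z = (snd (X (i1, j2)) + snd (X (i2, j1))) mod Z)"

(* Resampling-table semantics of Moser--Tardos:
   omega (e, k) is the k-th sample drawn for variable e (k = 0 is the initial sample).
   A counter cnt e records how many times e has been resampled so far. *)
definition assign :: "(edge \<times> nat \<Rightarrow> val) \<Rightarrow> (edge \<Rightarrow> nat) \<Rightarrow> edge \<Rightarrow> val" where
  "assign \<omega> cnt = (\<lambda>e. \<omega> (e, cnt e))"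

definition bump :: "(edge \<Rightarrow> nat) \<Rightarrow> cand \<Rightarrow> edge \<Rightarrow> nat" where
  "bump cnt c = (\<lambda>e. if e \<in> sc c then Suc (cnt e) else cnt e)"

(* The state is (counters, call stack of RESAMPLE frames).
   cs is the fixed ordering of C_4 (least index = first in the list).
   Empty stack: main loop; call RESAMPLE on least-indexed active event (if any).
   Top frame c: RESAMPLE(c)'s while loop: call RESAMPLE on the least-indexed active c'
   with sc c \<inter> sc c' \<noteq> {}, or return.
   The second component is Some c' iff this step performs a call RESAMPLE(c'). *)
definition mt_step :: "nat \<Rightarrow> cand list \<Rightarrow> (edge \<times> nat \<Rightarrow> val) \<Rightarrow>
    (edge \<Rightarrow> nat) \<times> cand list \<Rightarrow> ((edge \<Rightarrow> nat) \<times> cand list) \<times> cand option" where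
  "mt_step Z cs \<omega> st = (case st of (cnt, stk) \<Rightarrow>
     (case stk of
        [] \<Rightarrow> (case find (active Z (assign \<omega> cnt)) cs of
                 None \<Rightarrow> ((cnt, []), None)
               | Some c \<Rightarrow> ((bump cnt c, [c]), Some c))
      | c # rest \<Rightarrow> (case find (\<lambda>c'. active Z (assign \<omega> cnt) c' \<and> sc c \<inter> sc c' \<noteq> {}) cs of
                 None \<Rightarrow> ((cnt, rest), None)
               | Some c' \<Rightarrow> ((bump cnt c', c' # c # rest), Some c'))))"

definition mt_state :: "nat \<Rightarrow> cand list \<Rightarrow> (edge \<times> nat \<Rightarrow> val) \<Rightarrow> nat \<Rightarrow>
    (edge \<Rightarrow> nat) \<times> cand list" where
  "mt_state Z cs \<omega> n = ((\<lambda>st. fst (mt_step Z cs \<omega> st)) ^^ n) (\<lambda>_. 0, [])"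

definition mt_halted :: "nat \<Rightarrow> cand list \<Rightarrow> (edge \<times> nat \<Rightarrow> val) \<Rightarrow> nat \<Rightarrow> bool" where
  "mt_halted Z cs \<omega> n = (snd (mt_state Z cs \<omega> n) = [] \<and>
      (\<forall>c\<in>set cs. \<not> active Z (assign \<omega> (fst (mt_state Z cs \<omega> n))) c))"

definition mt_terminates :: "nat \<Rightarrow> cand list \<Rightarrow> (edge \<times> nat \<Rightarrow> val) \<Rightarrow> bool" where
  "mt_terminates Z cs \<omega> = (\<exists>n. mt_halted Z cs \<omega> n)"

definition mt_output :: "nat \<Rightarrow> cand list \<Rightarrow> (edge \<times> nat \<Rightarrow> val) \<Rightarrow> edge \<Rightarrow> val" where
  "mt_output Z cs \<omega> = assign \<omega> (fst (mt_state Z cs \<omega> (LEAST n. mt_halted Z cs \<omega> n)))"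

definition resample_count :: "nat \<Rightarrow> cand list \<Rightarrow> (edge \<times> nat \<Rightarrow> val) \<Rightarrow> cand \<Rightarrow> ennreal" where
  "resample_count Z cs \<omega> c =
     (\<Sum>n. if snd (mt_step Z cs \<omega> (mt_state Z cs \<omega> n)) = Some c then 1 else 0)"

definition table_space :: "nat \<Rightarrow> nat \<Rightarrow> (edge \<times> nat \<Rightarrow> val) measure" where
  "table_space m Z = PiM UNIV (\<lambda>_. measure_pmf (pmf_of_set ({0..m} \<times> {0..<Z})))"

end

theory Submission
  imports Defs
begin

definition dep :: "cand \<Rightarrow> cand \<Rightarrow> bool" where
  "dep B B' \<longleftrightarrow> sc B \<inter> sc B' \<noteq> {}"

lemma sc_ne: "sc B \<noteq> {}"
  by (cases B) (auto simp: sc_def)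

lemma dep_refl: "dep B B"
  using sc_ne by (auto simp: dep_def)

lemma dep_sym: "dep B B' \<Longrightarrow> dep B' B"
  by (auto simp: dep_def)

lemma active_local:
  assumes "\<And>e. e \<in> sc c \<Longrightarrow> X e = Y e"
  shows "active Z X c = active Z Y c"
  using assms by (cases c) (simp add: active_def sc_def)

definition cntf :: "(nat \<Rightarrow> cand option) \<Rightarrow> nat \<Rightarrow> edge \<Rightarrow> nat" where
  "cntf call n e = card {s. s < n \<and> (\<exists>c. call s = Some c \<and> e \<in> sc c)}"

definition Rw :: "(nat \<Rightarrow> cand option) \<Rightarrow> nat \<Rightarrow> (nat \<times> nat) set" where
  "Rw call t = {(s,s'). s < s' \<and> s' \<le> t \<and> call s \<noteq> None \<and> call s' \<noteq> None \<and>
      dep (the (call s)) (the (call s'))}"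

definition intree :: "(nat \<Rightarrow> cand option) \<Rightarrow> nat \<Rightarrow> nat \<Rightarrow> bool" where
  "intree call t s \<longleftrightarrow> (\<exists>k. (s,t) \<in> Rw call t ^^ k)"

definition dp :: "(nat \<Rightarrow> cand option) \<Rightarrow> nat \<Rightarrow> nat \<Rightarrow> nat" where
  "dp call t s = (GREATEST k. (s,t) \<in> Rw call t ^^ k)"

definition Lay :: "(nat \<Rightarrow> cand option) \<Rightarrow> nat \<Rightarrow> nat \<Rightarrow> cand set" where
  "Lay call t i = (\<lambda>s. the (call s)) ` {s. intree call t s \<and> dp call t s = i}"

definition Dm :: "(nat \<Rightarrow> cand option) \<Rightarrow> nat \<Rightarrow> nat" where
  "Dm call t = Max (dp call t ` {s. intree call t s})"

definition wit :: "(nat \<Rightarrow> cand option) \<Rightarrow> nat \<Rightarrow> cand set list" where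
  "wit call t = map (Lay call t) [0..<Suc (Dm call t)]"

fun stab :: "cand set \<Rightarrow> cand set \<Rightarrow> cand set list \<Rightarrow> bool" where
  "stab U I [] = True"
| "stab U I (L # Ls) = (L \<noteq> {} \<and> L \<subseteq> U \<and> (\<forall>B\<in>L. \<forall>B'\<in>L. B \<noteq> B' \<longrightarrow> \<not> dep B B') \<and>
      (\<forall>B\<in>L. \<exists>B'\<in>I. dep B B') \<and> stab U L Ls)"

definition kap :: "cand set list \<Rightarrow> nat \<Rightarrow> edge \<Rightarrow> nat" where
  "kap \<sigma> i e = (\<Sum>j\<in>{Suc i..<length \<sigma>}. card {B\<in>\<sigma>!j. e \<in> sc B})"

definition Ev :: "nat \<Rightarrow> cand set list \<Rightarrow> (edge \<times> nat \<Rightarrow> val) set" where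
  "Ev Z \<sigma> = {\<omega>. \<forall>i<length \<sigma>. \<forall>B\<in>\<sigma>!i. active Z (\<lambda>e. \<omega> (e, kap \<sigma> i e)) B}"

context
  fixes call :: "nat \<Rightarrow> cand option" and t :: nat and A :: cand
  assumes callt: "call t = Some A"
begin

private abbreviation "R \<equiv> Rw call t"

lemma relpow_time: "(s,s') \<in> R ^^ k \<Longrightarrow> s + k \<le> s' \<and> (k = 0 \<longrightarrow> s = s') \<and> (k > 0 \<longrightarrow> s' \<le> t \<and> call s \<noteq> None)"
proof (induction k arbitrary: s')
  case 0 then show ?case by simp
next
  case (Suc k)
  then obtain s'' where 1: "(s,s'') \<in> R ^^ k" and 2: "(s'',s') \<in> R" by auto
  from Suc.IH[OF 1] 2 show ?case by (cases k) (auto simp: Rw_def)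
qed

lemma bound_k: assumes "(s,t) \<in> R ^^ k" shows "k \<le> t - s"
proof -
  have "s + k \<le> t" using relpow_time[OF assms] by blast
  then show ?thesis by simp
qed

lemma dp_path: "intree call t s \<Longrightarrow> (s,t) \<in> R ^^ dp call t s"
proof -
  assume "intree call t s"
  then obtain k where k: "(s,t) \<in> R ^^ k" unfolding intree_def by blast
  show ?thesis unfolding dp_def
    by (rule GreatestI_nat[of _ k "t - s"]) (use k bound_k in auto)
qed

lemma dp_max: "(s,t) \<in> R ^^ k \<Longrightarrow> k \<le> dp call t s"
  unfolding dp_def by (rule Greatest_le_nat[of _ k "t - s"]) (use bound_k in auto)

lemma intree_t: "intree call t t"
  unfolding intree_def by (rule exI[of _ 0]) simp

lemma dp_t: "dp call t t = 0"
proof -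
  have "(t,t) \<in> R ^^ dp call t t" by (rule dp_path[OF intree_t])
  from relpow_time[OF this] show ?thesis by simp
qed

lemma intree_le: "intree call t s \<Longrightarrow> s \<le> t"
proof -
  assume "intree call t s"
  then obtain k where k: "(s,t) \<in> R ^^ k" unfolding intree_def by blast
  from relpow_time[OF k] show ?thesis by simp
qed

lemma intree_call: "intree call t s \<Longrightarrow> call s \<noteq> None"
proof -
  assume a: "intree call t s"
  show ?thesis
  proof (cases "s = t")
    case True then show ?thesis using callt by simp
  next
    case False
    from a obtain k where k: "(s,t) \<in> R ^^ k" unfolding intree_def by blast
    with False have "k > 0" by (cases k) auto
    with relpow_time[OF k] show ?thesis by simp
  qed
qed

lemma step_back:
  assumes "(s,s') \<in> R" "intree call t s'"
  shows "intree call t s \<and> dp call t s' + 1 \<le> dp call t s"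
proof -
  have "(s,t) \<in> R ^^ Suc (dp call t s')"
    using relpow_Suc_I2[OF assms(1) dp_path[OF assms(2)]] .
  then show ?thesis unfolding intree_def using dp_max by fastforce
qed

lemma step_fwd:
  assumes "intree call t s" "s \<noteq> t"
  shows "\<exists>s'. (s,s') \<in> R \<and> intree call t s' \<and> dp call t s = Suc (dp call t s')"
proof -
  have p: "(s,t) \<in> R ^^ dp call t s" by (rule dp_path[OF assms(1)])
  then obtain k where k: "dp call t s = Suc k" using assms(2) by (cases "dp call t s") auto
  with p obtain s' where 1: "(s,s') \<in> R" and 2: "(s',t) \<in> R ^^ k"
    using relpow_Suc_D2 by metis
  have it: "intree call t s'" using 2 unfolding intree_def by blast
  have "k \<le> dp call t s'" using dp_max[OF 2] .
  moreover have "dp call t s' + 1 \<le> dp call t s" using step_back[OF 1 it] by simp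
  ultimately show ?thesis using 1 it k by (intro exI[of _ s']) auto
qed

lemma dp0: "intree call t s \<Longrightarrow> dp call t s = 0 \<Longrightarrow> s = t"
proof (rule ccontr)
  assume "intree call t s" "dp call t s = 0" "s \<noteq> t"
  then obtain s' where "dp call t s = Suc (dp call t s')" using step_fwd by blast
  then show False using \<open>dp call t s = 0\<close> by simp
qed

lemma R_intro: "s < s' \<Longrightarrow> s' \<le> t \<Longrightarrow> call s \<noteq> None \<Longrightarrow> call s' \<noteq> None \<Longrightarrow>
   dep (the (call s)) (the (call s')) \<Longrightarrow> (s,s') \<in> R"
  unfolding Rw_def by simp

lemma same_depth_indep:
  assumes "intree call t s1" "intree call t s2" "s1 \<noteq> s2" "dp call t s1 = dp call t s2"
  shows "\<not> dep (the (call s1)) (the (call s2))"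
proof
  assume d: "dep (the (call s1)) (the (call s2))"
  show False
  proof (cases "s1 < s2")
    case True
    then have "(s1,s2) \<in> R"
      using d assms(1,2) intree_le intree_call by (intro R_intro) auto
    from step_back[OF this assms(2)] assms(4) show False by simp
  next
    case False
    then have "s2 < s1" using assms(3) by simp
    then have "(s2,s1) \<in> R"
      using dep_sym[OF d] assms(1,2) intree_le intree_call by (intro R_intro) auto
    from step_back[OF this assms(1)] assms(4) show False by simp
  qed
qed

lemma fin_tree: "finite {s. intree call t s}"
proof -
  have "{s. intree call t s} \<subseteq> {..t}" using intree_le by blast
  then show ?thesis using finite_subset by blast
qed

lemma dp_le_Dm: "intree call t s \<Longrightarrow> dp call t s \<le> Dm call t"
  unfolding Dm_def using fin_tree by (intro Max_ge) auto

lemma Dm_ex: "\<exists>s. intree call t s \<and> dp call t s = Dm call t"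
proof -
  have "Dm call t \<in> dp call t ` {s. intree call t s}"
    unfolding Dm_def using fin_tree intree_t by (intro Max_in) auto
  then show ?thesis by auto
qed

lemma Dm_le: "Dm call t \<le> t"
proof -
  obtain s where s: "intree call t s" "dp call t s = Dm call t" using Dm_ex by blast
  have "dp call t s \<le> t - s" by (rule bound_k[OF dp_path[OF s(1)]])
  then show ?thesis using s by simp
qed

lemma Lay0: "Lay call t 0 = {A}"
proof -
  have "{s. intree call t s \<and> dp call t s = 0} = {t}" using dp0 intree_t dp_t by auto
  then show ?thesis unfolding Lay_def using callt by simp
qed

lemma Lay_ne_aux: "intree call t s \<Longrightarrow> i \<le> dp call t s \<Longrightarrow> Lay call t i \<noteq> {}"
proof (induction "dp call t s" arbitrary: s)
  case 0 then show ?case unfolding Lay_def by auto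
next
  case (Suc n)
  show ?case
  proof (cases "i = dp call t s")
    case True then show ?thesis unfolding Lay_def using Suc.prems by auto
  next
    case False
    have "s \<noteq> t" using Suc.hyps dp_t by auto
    then obtain s' where "intree call t s'" "dp call t s = Suc (dp call t s')"
      using step_fwd Suc.prems by blast
    then show ?thesis using Suc.hyps(1)[of s'] Suc.hyps(2) Suc.prems False by auto
  qed
qed

lemma Lay_ne: "i \<le> Dm call t \<Longrightarrow> Lay call t i \<noteq> {}"
  using Dm_ex Lay_ne_aux by metis

lemma Lay_indep: "B \<in> Lay call t i \<Longrightarrow> B' \<in> Lay call t i \<Longrightarrow> B \<noteq> B' \<Longrightarrow> \<not> dep B B'"
proof -
  assume "B \<in> Lay call t i" "B' \<in> Lay call t i" "B \<noteq> B'"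
  then obtain s s' where "intree call t s" "dp call t s = i" "B = the (call s)"
    "intree call t s'" "dp call t s' = i" "B' = the (call s')" unfolding Lay_def by auto
  then show ?thesis using same_depth_indep[of s s'] \<open>B \<noteq> B'\<close> by metis
qed

lemma Lay_succ: "B \<in> Lay call t (Suc i) \<Longrightarrow> \<exists>B'\<in>Lay call t i. dep B B'"
proof -
  assume "B \<in> Lay call t (Suc i)"
  then obtain s where s: "intree call t s" "dp call t s = Suc i" "B = the (call s)"
    unfolding Lay_def by auto
  then have "s \<noteq> t" using dp_t by auto
  then obtain s' where "(s,s') \<in> R" "intree call t s'" "dp call t s = Suc (dp call t s')"
    using step_fwd s by blast
  then show ?thesis using s unfolding Lay_def Rw_def by auto
qed

lemma Lay_sub:
  assumes "\<And>s c. call s = Some c \<Longrightarrow> c \<in> U"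
  shows "Lay call t i \<subseteq> U"
  unfolding Lay_def using intree_call assms by fastforce

lemma fin_Lay: "finite (Lay call t i)"
  unfolding Lay_def using fin_tree by (auto intro: finite_subset)

lemma stab_wit_aux:
  assumes "\<And>s c. call s = Some c \<Longrightarrow> c \<in> U"
  shows "j \<le> Dm call t \<Longrightarrow> stab U (Lay call t j) (map (Lay call t) [Suc j..<Suc (Dm call t)])"
proof (induction "Dm call t - j" arbitrary: j)
  case 0 then show ?case by simp
next
  case (Suc n)
  then have "j < Dm call t" by simp
  then have u: "[Suc j..<Suc (Dm call t)] = Suc j # [Suc (Suc j)..<Suc (Dm call t)]"
    using upt_rec by auto
  show ?case unfolding u using Suc.hyps(1)[of "Suc j"] Suc.hyps(2) \<open>j < Dm call t\<close>
      Lay_ne Lay_sub[OF assms] Lay_indep Lay_succ by auto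
qed

lemma wit_Cons: "wit call t = {A} # map (Lay call t) [Suc 0..<Suc (Dm call t)]"
  unfolding wit_def using Lay0 by (simp add: upt_rec)

lemma stab_wit:
  assumes "\<And>s c. call s = Some c \<Longrightarrow> c \<in> U"
  shows "stab U {A} (tl (wit call t))"
  using stab_wit_aux[OF assms, where j=0] Lay0 by (simp add: wit_Cons)

lemma length_wit: "length (wit call t) \<le> Suc t"
  unfolding wit_def using Dm_le by simp

lemma kap_wit:
  assumes "intree call t s" "e \<in> sc (the (call s))"
  shows "cntf call s e = kap (wit call t) (dp call t s) e"
proof -
  let ?i = "dp call t s"
  let ?D = "Dm call t"
  let ?X = "{s'. s' < s \<and> (\<exists>c. call s' = Some c \<and> e \<in> sc c)}"
  let ?Y = "Sigma {Suc ?i..<Suc ?D} (\<lambda>j. {B\<in>Lay call t j. e \<in> sc B})"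
  have "kap (wit call t) ?i e = (\<Sum>j\<in>{Suc ?i..<Suc ?D}. card {B\<in>Lay call t j. e \<in> sc B})"
    unfolding kap_def wit_def by (intro sum.cong refl) (auto simp del: upt_Suc)
  also have "\<dots> = card ?Y" using fin_Lay by (subst card_SigmaI) auto
  also have "card ?Y = card ?X"
  proof (rule sym, rule bij_betw_same_card[of "\<lambda>s'. (dp call t s', the (call s'))"])
    show "bij_betw (\<lambda>s'. (dp call t s', the (call s'))) ?X ?Y"
    proof (rule bij_betwI')
      fix x y assume x: "x \<in> ?X" and y: "y \<in> ?X"
      have rx: "(x,s) \<in> R" using x assms intree_le intree_call unfolding Rw_def dep_def by force
      have ry: "(y,s) \<in> R" using y assms intree_le intree_call unfolding Rw_def dep_def by force
      have ix: "intree call t x" and iy: "intree call t y" using step_back rx ry assms by auto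
      show "((dp call t x, the (call x)) = (dp call t y, the (call y))) = (x = y)"
        by (metis Pair_inject dep_refl same_depth_indep[OF ix iy])
    next
      fix x assume x: "x \<in> ?X"
      have rx: "(x,s) \<in> R" using x assms intree_le intree_call unfolding Rw_def dep_def by force
      have ix: "intree call t x" using step_back rx assms by auto
      have "dp call t s + 1 \<le> dp call t x" using step_back rx assms by auto
      then show "(dp call t x, the (call x)) \<in> ?Y"
        using dp_le_Dm[OF ix] ix x unfolding Lay_def by auto
    next
      fix y assume y: "y \<in> ?Y"
      then obtain j B where jB: "y = (j,B)" "Suc ?i \<le> j" "j \<le> ?D" "B \<in> Lay call t j" "e \<in> sc B"
        by auto
      then obtain s' where s': "intree call t s'" "dp call t s' = j" "B = the (call s')"
        unfolding Lay_def by auto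
      have "s' \<noteq> s" using jB s' by auto
      have "s' < s"
      proof (rule ccontr)
        assume "\<not> s' < s"
        then have "s < s'" using \<open>s' \<noteq> s\<close> by simp
        then have "(s,s') \<in> R" using assms s' jB intree_le intree_call unfolding Rw_def dep_def by force
        then show False using step_back s' jB by fastforce
      qed
      have cs': "call s' = Some B" using s'(1,3) intree_call[OF s'(1)] by auto
      have "s' \<in> ?X" using \<open>s' < s\<close> cs' jB(5) by blast
      then show "\<exists>x\<in>?X. y = (dp call t x, the (call x))"
        using s' jB(1) by (intro bexI[of _ s']) auto
    qed
  qed
  finally show ?thesis unfolding cntf_def by simp
qed

lemma wit_Ev:
  assumes act: "\<And>s c. call s = Some c \<Longrightarrow> active Z (\<lambda>e. \<omega> (e, cntf call s e)) c"
  shows "\<omega> \<in> Ev Z (wit call t)"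
  unfolding Ev_def
proof (intro CollectI allI impI ballI)
  fix i B assume i: "i < length (wit call t)" and B: "B \<in> wit call t ! i"
  then have "B \<in> Lay call t i" unfolding wit_def by (simp del: upt_Suc)
  then obtain s where s: "intree call t s" "dp call t s = i" "B = the (call s)"
    unfolding Lay_def by auto
  have cs: "call s = Some B" using s(3) intree_call[OF s(1)] by auto
  have eq: "\<And>e. e \<in> sc B \<Longrightarrow> \<omega> (e, kap (wit call t) i e) = \<omega> (e, cntf call s e)"
    using kap_wit[OF s(1)] s(2) cs by simp
  show "active Z (\<lambda>e. \<omega> (e, kap (wit call t) i e)) B"
    using act[OF cs] active_local[of B "\<lambda>e. \<omega> (e, kap (wit call t) i e)" "\<lambda>e. \<omega> (e, cntf call s e)" Z] eq
    by blast
qed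

lemma count_wit: "card {i. i < length (wit call t) \<and> A \<in> wit call t ! i} = card {s. s \<le> t \<and> call s = Some A}"
proof -
  have "{i. i < length (wit call t) \<and> A \<in> wit call t ! i} = dp call t ` {s. intree call t s \<and> call s = Some A}"
  proof (intro set_eqI iffI)
    fix i assume "i \<in> {i. i < length (wit call t) \<and> A \<in> wit call t ! i}"
    then have "A \<in> Lay call t i" unfolding wit_def by (auto simp del: upt_Suc)
    then show "i \<in> dp call t ` {s. intree call t s \<and> call s = Some A}"
      unfolding Lay_def using intree_call by fastforce
  next
    fix i assume "i \<in> dp call t ` {s. intree call t s \<and> call s = Some A}"
    then obtain s where s: "intree call t s" "call s = Some A" "i = dp call t s" by auto
    have il: "i < Suc (Dm call t)" using dp_le_Dm[OF s(1)] s(3) by simp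
    have "A \<in> Lay call t i" unfolding Lay_def using s by force
    then show "i \<in> {i. i < length (wit call t) \<and> A \<in> wit call t ! i}"
      unfolding wit_def using il by (simp del: upt_Suc)
  qed
  also have "card \<dots> = card {s. intree call t s \<and> call s = Some A}"
  proof (rule card_image, rule inj_onI)
    fix x y assume xy: "x \<in> {s. intree call t s \<and> call s = Some A}" "y \<in> {s. intree call t s \<and> call s = Some A}"
      and "dp call t x = dp call t y"
    show "x = y"
    proof (rule ccontr)
      assume "x \<noteq> y"
      then have "\<not> dep (the (call x)) (the (call y))" using same_depth_indep[of x y] xy \<open>dp call t x = dp call t y\<close> by auto
      then show False using xy dep_refl by auto
    qed
  qed
  also have "{s. intree call t s \<and> call s = Some A} = {s. s \<le> t \<and> call s = Some A}"
  proof (intro set_eqI iffI)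
    fix s assume "s \<in> {s. s \<le> t \<and> call s = Some A}"
    then have s: "s \<le> t" "call s = Some A" by auto
    show "s \<in> {s. intree call t s \<and> call s = Some A}"
    proof (cases "s = t")
      case True then show ?thesis using intree_t s by simp
    next
      case False
      then have "(s,t) \<in> R" using s callt dep_refl[of A] by (intro R_intro) simp_all
      then show ?thesis using step_back intree_t s by auto
    qed
  qed (auto intro: intree_le)
  finally show ?thesis .
qed

end

lemma wit_inj:
  assumes "call t1 = Some A" "call t2 = Some A" "t1 < t2"
  shows "wit call t1 \<noteq> wit call t2"
proof
  assume eq: "wit call t1 = wit call t2"
  have eqc: "card {s. s \<le> t1 \<and> call s = Some A} = card {s. s \<le> t2 \<and> call s = Some A}"
    using count_wit[where call=call and t=t1 and A=A, OF assms(1)] count_wit[where call=call and t=t2 and A=A, OF assms(2)] eq by simp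
  have sub: "{s. s \<le> t1 \<and> call s = Some A} \<subset> {s. s \<le> t2 \<and> call s = Some A}"
  proof
    show "{s. s \<le> t1 \<and> call s = Some A} \<subseteq> {s. s \<le> t2 \<and> call s = Some A}" using assms by auto
    have "t2 \<in> {s. s \<le> t2 \<and> call s = Some A}" "t2 \<notin> {s. s \<le> t1 \<and> call s = Some A}" using assms by auto
    then show "{s. s \<le> t1 \<and> call s = Some A} \<noteq> {s. s \<le> t2 \<and> call s = Some A}" by blast
  qed
  have "finite {s. s \<le> t2 \<and> call s = Some A}" by simp
  then have "card {s. s \<le> t1 \<and> call s = Some A} < card {s. s \<le> t2 \<and> call s = Some A}"
    using sub by (intro psubset_card_mono) auto
  with eqc show False by simp
qed


definition indep :: "cand set \<Rightarrow> bool" where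
  "indep L \<longleftrightarrow> (\<forall>B\<in>L. \<forall>B'\<in>L. B \<noteq> B' \<longrightarrow> \<not> dep B B')"

definition Valid :: "cand set \<Rightarrow> cand set \<Rightarrow> cand set set" where
  "Valid U I = {L. L \<noteq> {} \<and> L \<subseteq> U \<and> indep L \<and> (\<forall>B\<in>L. \<exists>B'\<in>I. dep B B')}"

definition Sn :: "cand set \<Rightarrow> cand set \<Rightarrow> nat \<Rightarrow> cand set list set" where
  "Sn U I n = {Ls. length Ls \<le> n \<and> stab U I Ls}"

definition wt :: "real \<Rightarrow> cand set list \<Rightarrow> real" where
  "wt p Ls = p ^ sum_list (map card Ls)"


lemma stab_Cons_iff: "stab U I (L # Ls) \<longleftrightarrow> L \<in> Valid U I \<and> stab U L Ls"
  unfolding Valid_def indep_def by auto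

lemma stab_set: "stab U I Ls \<Longrightarrow> set Ls \<subseteq> Pow U"
  by (induction Ls arbitrary: I) auto

declare stab.simps(2)[simp del]
declare stab_Cons_iff[simp]

lemma finite_Sn: "finite U \<Longrightarrow> finite (Sn U I n)"
proof -
  assume U: "finite U"
  have "Sn U I n \<subseteq> {xs. set xs \<subseteq> Pow U \<and> length xs \<le> n}"
    unfolding Sn_def using stab_set by blast
  moreover have "finite {xs. set xs \<subseteq> Pow U \<and> length xs \<le> n}"
    using U by (intro finite_lists_length_le) simp
  ultimately show ?thesis using finite_subset by blast
qed

lemma finite_Valid: "finite U \<Longrightarrow> finite (Valid U I)"
proof -
  assume U: "finite U"
  have "Valid U I \<subseteq> Pow U" unfolding Valid_def by blast
  then show ?thesis using U finite_subset by blast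
qed

lemma Sn_Suc: "Sn U I (Suc n) = insert [] (\<Union>L\<in>Valid U I. (#) L ` Sn U L n)"
proof (intro set_eqI iffI)
  fix Ls assume "Ls \<in> Sn U I (Suc n)"
  then show "Ls \<in> insert [] (\<Union>L\<in>Valid U I. (#) L ` Sn U L n)"
  proof (cases Ls)
    case Nil then show ?thesis by simp
  next
    case (Cons L Ls')
    have "stab U I (L # Ls')" "length Ls' \<le> n" using \<open>Ls \<in> Sn U I (Suc n)\<close> Cons
      unfolding Sn_def by auto
    then have "L \<in> Valid U I" "Ls' \<in> Sn U L n" unfolding stab_Cons_iff Sn_def by auto
    then show ?thesis using Cons by blast
  qed
next
  fix Ls assume "Ls \<in> insert [] (\<Union>L\<in>Valid U I. (#) L ` Sn U L n)"
  then show "Ls \<in> Sn U I (Suc n)"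
    by (auto simp: Sn_def stab_Cons_iff)
qed

lemma H_bound:
  assumes U: "finite U" and p: "0 \<le> p" and mu: "0 \<le> \<mu>"
    and KP: "\<And>I. I \<subseteq> U \<Longrightarrow> indep I \<Longrightarrow>
       p ^ card I * (\<Sum>L\<in>insert {} (Valid U I). \<mu> ^ card L) \<le> \<mu> ^ card I"
  shows "I \<subseteq> U \<Longrightarrow> indep I \<Longrightarrow> p ^ card I * (\<Sum>Ls\<in>Sn U I n. wt p Ls) \<le> \<mu> ^ card I"
proof (induction n arbitrary: I)
  case 0
  have "Sn U I 0 = {[]}" by (auto simp: Sn_def)
  then have s: "(\<Sum>Ls\<in>Sn U I 0. wt p Ls) = 1" by (simp add: wt_def)
  have "(1::real) \<le> (\<Sum>L\<in>insert {} (Valid U I). \<mu> ^ card L)"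
    using member_le_sum[of "{}" "insert {} (Valid U I)" "\<lambda>L. \<mu> ^ card L"] mu finite_Valid[OF U]
    by simp
  then have "p ^ card I * 1 \<le> p ^ card I * (\<Sum>L\<in>insert {} (Valid U I). \<mu> ^ card L)"
    by (intro mult_left_mono) (simp_all add: p)
  then show ?case using KP[OF 0(1,2)] s by simp
next
  case (Suc n)
  have disj: "{} \<notin> Valid U I" unfolding Valid_def by blast
  have fV: "finite (Valid U I)" by (rule finite_Valid[OF U])
  have nm: "[] \<notin> (\<Union>L\<in>Valid U I. (#) L ` Sn U L n)" by auto
  have fU: "finite (\<Union>L\<in>Valid U I. (#) L ` Sn U L n)"
    using fV finite_Sn[OF U] by blast
  have "(\<Sum>Ls\<in>Sn U I (Suc n). wt p Ls) = wt p [] + (\<Sum>Ls\<in>(\<Union>L\<in>Valid U I. (#) L ` Sn U L n). wt p Ls)"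
    unfolding Sn_Suc using nm fU by (simp add: sum.insert)
  also have "(\<Sum>Ls\<in>(\<Union>L\<in>Valid U I. (#) L ` Sn U L n). wt p Ls) =
      (\<Sum>L\<in>Valid U I. \<Sum>Ls\<in>(#) L ` Sn U L n. wt p Ls)"
  proof (rule sum.UNION_disjoint)
    show "finite (Valid U I)" by (rule fV)
    show "\<forall>i\<in>Valid U I. finite ((#) i ` Sn U i n)" using finite_Sn[OF U] by blast
    show "\<forall>i\<in>Valid U I. \<forall>j\<in>Valid U I. i \<noteq> j \<longrightarrow> (#) i ` Sn U i n \<inter> (#) j ` Sn U j n = {}"
      by blast
  qed
  also have "\<dots> = (\<Sum>L\<in>Valid U I. \<Sum>Ls\<in>Sn U L n. wt p (L # Ls))"
  proof (rule sum.cong[OF refl])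
    fix L show "(\<Sum>Ls\<in>(#) L ` Sn U L n. wt p Ls) = (\<Sum>Ls\<in>Sn U L n. wt p (L # Ls))"
      by (subst sum.reindex) (auto simp: inj_on_def)
  qed
  also have "\<dots> = (\<Sum>L\<in>Valid U I. p ^ card L * (\<Sum>Ls\<in>Sn U L n. wt p Ls))"
    by (simp add: wt_def power_add sum_distrib_left)
  finally have eq: "(\<Sum>Ls\<in>Sn U I (Suc n). wt p Ls) =
      1 + (\<Sum>L\<in>Valid U I. p ^ card L * (\<Sum>Ls\<in>Sn U L n. wt p Ls))"
    by (simp add: wt_def)
  have "(\<Sum>L\<in>Valid U I. p ^ card L * (\<Sum>Ls\<in>Sn U L n. wt p Ls)) \<le> (\<Sum>L\<in>Valid U I. \<mu> ^ card L)"
  proof (rule sum_mono)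
    fix L assume "L \<in> Valid U I"
    then have "L \<subseteq> U" "indep L" unfolding Valid_def by auto
    then show "p ^ card L * (\<Sum>Ls\<in>Sn U L n. wt p Ls) \<le> \<mu> ^ card L" by (rule Suc.IH)
  qed
  then have "(\<Sum>Ls\<in>Sn U I (Suc n). wt p Ls) \<le> (\<Sum>L\<in>insert {} (Valid U I). \<mu> ^ card L)"
    unfolding eq using disj fV by (simp add: sum.insert)
  then have "p ^ card I * (\<Sum>Ls\<in>Sn U I (Suc n). wt p Ls) \<le>
      p ^ card I * (\<Sum>L\<in>insert {} (Valid U I). \<mu> ^ card L)"
    by (intro mult_left_mono) (simp_all add: p)
  then show ?case using KP[OF Suc.prems] by linarith
qed


definition Vs :: "nat \<Rightarrow> nat \<Rightarrow> val set" where "Vs m Z = {0..m} \<times> {0..<Z}"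

lemma table_space_alt: "table_space m Z = PiM UNIV (\<lambda>_. measure_pmf (pmf_of_set (Vs m Z)))"
  unfolding table_space_def Vs_def ..

lemma space_T[simp]: "space (table_space m Z) = UNIV"
  by (simp add: table_space_def space_PiM)

lemma prob_space_T: "prob_space (table_space m Z)"
  unfolding table_space_def by (rule prob_space_PiM) (simp add: prob_space_measure_pmf)

lemma Vs_fin: "finite (Vs m Z)" unfolding Vs_def by simp

lemma Vs_ne: "Z \<ge> 1 \<Longrightarrow> Vs m Z \<noteq> {}" unfolding Vs_def by auto

lemma card_Vs: "card (Vs m Z) = (m + 1) * Z" unfolding Vs_def by (simp add: card_cartesian_product)

lemma cyl_sets: "finite K \<Longrightarrow> {\<omega>. \<forall>x\<in>K. \<omega> x = f x} \<in> sets (table_space m Z)"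
proof -
  assume K: "finite K"
  have "{\<omega> \<in> space (table_space m Z). \<forall>x\<in>K. \<omega> x \<in> {f x}} \<in> sets (table_space m Z)"
    unfolding table_space_def
    by (rule sets.sets_Collect_finite_All[OF _ K]) (rule sets_Collect_single, auto)
  then show ?thesis by (simp add: table_space_def space_PiM)
qed

lemma out_sets: "{\<omega>. \<omega> x \<notin> S} \<in> sets (table_space m Z)"
proof -
  have "{\<omega> \<in> space (table_space m Z). \<omega> x \<in> - S} \<in> sets (table_space m Z)"
    unfolding table_space_def by (rule sets_Collect_single) auto
  then show ?thesis by simp
qed

context
  fixes m Z :: nat
  assumes Z: "Z \<ge> 1"
begin

private abbreviation "q \<equiv> pmf_of_set (Vs m Z)"

lemma q_single: "v \<in> Vs m Z \<Longrightarrow> emeasure (measure_pmf q) {v} = ennreal (1 / card (Vs m Z))"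
  using Vs_fin Vs_ne[OF Z] by (subst emeasure_pmf_of_set) auto

lemma q_out: "emeasure (measure_pmf q) (- Vs m Z) = 0"
  using Vs_fin Vs_ne[OF Z] by (subst emeasure_pmf_of_set) auto

lemma cyl_emeasure:
  assumes K: "finite K" and f: "\<forall>x\<in>K. f x \<in> Vs m Z"
  shows "emeasure (table_space m Z) {\<omega>. \<forall>x\<in>K. \<omega> x = f x} = ennreal ((1 / card (Vs m Z)) ^ card K)"
proof -
  interpret P: product_prob_space "\<lambda>_::edge\<times>nat. measure_pmf q" UNIV
    by (rule product_prob_spaceI) (simp add: prob_space_measure_pmf)
  have "emeasure (table_space m Z) {\<omega>. \<forall>x\<in>K. \<omega> x = f x} =
      emeasure (PiM UNIV (\<lambda>_. measure_pmf q)) {\<omega> \<in> space (PiM UNIV (\<lambda>_. measure_pmf q)). \<forall>x\<in>K. \<omega> x \<in> {f x}}"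
    unfolding table_space_alt by (simp add: space_PiM)
  also have "\<dots> = (\<Prod>x\<in>K. emeasure (measure_pmf q) {f x})"
    by (rule P.emeasure_PiM_Collect) (use K in auto)
  also have "\<dots> = (\<Prod>x\<in>K. ennreal (1 / card (Vs m Z)))"
    using f q_single by (intro prod.cong refl) auto
  also have "\<dots> = ennreal ((1 / card (Vs m Z)) ^ card K)"
    by (simp add: ennreal_power)
  finally show ?thesis .
qed

lemma out_emeasure: "emeasure (table_space m Z) {\<omega>. \<omega> x \<notin> Vs m Z} = 0"
proof -
  interpret P: product_prob_space "\<lambda>_::edge\<times>nat. measure_pmf q" UNIV
    by (rule product_prob_spaceI) (simp add: prob_space_measure_pmf)
  have "emeasure (table_space m Z) {\<omega>. \<omega> x \<notin> Vs m Z} =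
      emeasure (PiM UNIV (\<lambda>_. measure_pmf q)) {\<omega> \<in> space (PiM UNIV (\<lambda>_. measure_pmf q)). \<omega> x \<in> - Vs m Z}"
    unfolding table_space_alt by (simp add: space_PiM)
  also have "\<dots> = emeasure (measure_pmf q) (- Vs m Z)"
    by (rule P.emeasure_PiM_Collect_single) auto
  finally show ?thesis using q_out by simp
qed

lemma cover_bound:
  assumes K: "finite K" and F: "F \<subseteq> PiE K (\<lambda>_. Vs m Z)"
    and E: "\<And>\<omega>. \<omega> \<in> E \<Longrightarrow> (\<forall>x\<in>K. \<omega> x \<in> Vs m Z) \<Longrightarrow> restrict \<omega> K \<in> F"
  shows "emeasure (table_space m Z) E \<le> ennreal (card F * (1 / card (Vs m Z)) ^ card K)"
proof -
  let ?T = "table_space m Z"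
  let ?C = "\<lambda>f. {\<omega>. \<forall>x\<in>K. \<omega> x = f x}"
  let ?B = "\<lambda>x. {\<omega>. \<omega> x \<notin> Vs m Z}"
  have finF: "finite F"
    using F finite_PiE[OF K, of "\<lambda>_. Vs m Z"] Vs_fin finite_subset by blast
  have sub: "E \<subseteq> (\<Union>f\<in>F. ?C f) \<union> (\<Union>x\<in>K. ?B x)"
  proof
    fix \<omega> assume w: "\<omega> \<in> E"
    show "\<omega> \<in> (\<Union>f\<in>F. ?C f) \<union> (\<Union>x\<in>K. ?B x)"
    proof (cases "\<forall>x\<in>K. \<omega> x \<in> Vs m Z")
      case True
      then have "restrict \<omega> K \<in> F" using E w by blast
      moreover have "\<omega> \<in> ?C (restrict \<omega> K)" by simp
      ultimately show ?thesis by blast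
    next
      case False then show ?thesis by blast
    qed
  qed
  have mC: "?C f \<in> sets ?T" for f using cyl_sets[OF K] .
  have mUC: "(\<Union>f\<in>F. ?C f) \<in> sets ?T" using finF mC by blast
  have mUB: "(\<Union>x\<in>K. ?B x) \<in> sets ?T" using K out_sets by blast
  have "emeasure ?T E \<le> emeasure ?T ((\<Union>f\<in>F. ?C f) \<union> (\<Union>x\<in>K. ?B x))"
    by (rule emeasure_mono[OF sub]) (use mUC mUB in blast)
  also have "\<dots> \<le> emeasure ?T (\<Union>f\<in>F. ?C f) + emeasure ?T (\<Union>x\<in>K. ?B x)"
    by (rule emeasure_subadditive[OF mUC mUB])
  also have "emeasure ?T (\<Union>x\<in>K. ?B x) \<le> (\<Sum>x\<in>K. emeasure ?T (?B x))"
    by (rule emeasure_subadditive_finite) (use K out_sets in auto)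
  also have "(\<Sum>x\<in>K. emeasure ?T (?B x)) = 0" using out_emeasure by simp
  also have "emeasure ?T (\<Union>f\<in>F. ?C f) \<le> (\<Sum>f\<in>F. emeasure ?T (?C f))"
    by (rule emeasure_subadditive_finite) (use finF mC in auto)
  also have "(\<Sum>f\<in>F. emeasure ?T (?C f)) = (\<Sum>f\<in>F. ennreal ((1 / card (Vs m Z)) ^ card K))"
  proof (rule sum.cong[OF refl])
    fix f assume "f \<in> F"
    then have "\<forall>x\<in>K. f x \<in> Vs m Z" using F by (auto simp: PiE_def Pi_def)
    then show "emeasure ?T (?C f) = ennreal ((1 / card (Vs m Z)) ^ card K)"
      by (rule cyl_emeasure[OF K])
  qed
  also have "\<dots> = ennreal (card F * (1 / card (Vs m Z)) ^ card K)"
    by (simp add: ennreal_of_nat_eq_real_of_nat ennreal_mult)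
  finally show ?thesis by simp
qed

end


definition NN :: "cand set list \<Rightarrow> (nat \<times> cand) set" where
  "NN \<sigma> = Sigma {..<length \<sigma>} (\<lambda>i. \<sigma>!i)"

definition KK :: "cand set list \<Rightarrow> nat \<times> cand \<Rightarrow> (edge \<times> nat) set" where
  "KK \<sigma> v = (\<lambda>e. (e, kap \<sigma> (fst v) e)) ` sc (snd v)"

definition Kall :: "cand set list \<Rightarrow> (edge \<times> nat) set" where
  "Kall \<sigma> = (\<Union>v\<in>NN \<sigma>. KK \<sigma> v)"

definition good :: "nat \<Rightarrow> nat \<Rightarrow> cand set list \<Rightarrow> bool" where
  "good \<gamma> \<kappa> \<sigma> \<longleftrightarrow> (\<forall>i<length \<sigma>. \<sigma>!i \<subseteq> C4 \<gamma> \<kappa> \<and> indep (\<sigma>!i))"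

definition c4set :: "nat \<Rightarrow> nat \<Rightarrow> (val \<times> val \<times> val \<times> val) set" where
  "c4set m Z = {(a,b,c,d). a \<in> Vs m Z \<and> b \<in> Vs m Z \<and> c \<in> Vs m Z \<and> d \<in> Vs m Z \<and>
     fst a + fst d = fst b + fst c \<and> (snd a + snd d) mod Z = (snd b + snd c) mod Z}"

lemma finite_C4: "finite (C4 \<gamma> \<kappa>)"
proof -
  have "C4 \<gamma> \<kappa> \<subseteq> {..<\<kappa>} \<times> {..<\<gamma>} \<times> {..<\<kappa>} \<times> {..<\<gamma>}" unfolding C4_def by auto
  then show ?thesis using finite_subset by blast
qed

lemma card_sc: "B \<in> C4 \<gamma> \<kappa> \<Longrightarrow> card (sc B) = 4"
  unfolding C4_def sc_def by auto

lemma finite_sc: "finite (sc B)"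
  by (cases B) (simp add: sc_def)

lemma good_fin: "good \<gamma> \<kappa> \<sigma> \<Longrightarrow> i < length \<sigma> \<Longrightarrow> finite (\<sigma>!i)"
  unfolding good_def using finite_C4 finite_subset by blast

lemma finite_NN: "good \<gamma> \<kappa> \<sigma> \<Longrightarrow> finite (NN \<sigma>)"
  unfolding NN_def using good_fin by blast

lemma finite_Kall: "good \<gamma> \<kappa> \<sigma> \<Longrightarrow> finite (Kall \<sigma>)"
  unfolding Kall_def KK_def using finite_NN finite_sc by blast

lemma kap_gt:
  assumes g: "good \<gamma> \<kappa> \<sigma>" and ii: "i < i'" "i' < length \<sigma>" and B: "B' \<in> \<sigma>!i'" "e \<in> sc B'"
  shows "kap \<sigma> i' e < kap \<sigma> i e"
proof -
  let ?c = "\<lambda>j. card {B\<in>\<sigma>!j. e \<in> sc B}"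
  have "1 \<le> ?c i'"
  proof -
    have "finite {B\<in>\<sigma>!i'. e \<in> sc B}" using good_fin[OF g ii(2)] by simp
    moreover have "B' \<in> {B\<in>\<sigma>!i'. e \<in> sc B}" using B by simp
    ultimately show ?thesis by (metis One_nat_def Suc_leI card_gt_0_iff empty_iff)
  qed
  have "kap \<sigma> i' e + ?c i' = (\<Sum>j\<in>insert i' {Suc i'..<length \<sigma>}. ?c j)"
    unfolding kap_def by (simp add: sum.insert)
  also have "\<dots> \<le> (\<Sum>j\<in>{Suc i..<length \<sigma>}. ?c j)"
    by (rule sum_mono2) (use ii in auto)
  also have "\<dots> = kap \<sigma> i e" unfolding kap_def ..
  finally show ?thesis using \<open>1 \<le> ?c i'\<close> by linarith
qed

lemma KK_disj:
  assumes g: "good \<gamma> \<kappa> \<sigma>" and v: "v \<in> NN \<sigma>" and w: "w \<in> NN \<sigma>" and vw: "v \<noteq> w"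
  shows "KK \<sigma> v \<inter> KK \<sigma> w = {}"
proof (rule ccontr)
  assume "KK \<sigma> v \<inter> KK \<sigma> w \<noteq> {}"
  then obtain e where e1: "e \<in> sc (snd v)" and e2: "e \<in> sc (snd w)" and k: "kap \<sigma> (fst v) e = kap \<sigma> (fst w) e"
    unfolding KK_def by auto
  obtain i B where vi: "v = (i,B)" by (cases v)
  obtain i' B' where wi: "w = (i',B')" by (cases w)
  have iB: "i < length \<sigma>" "B \<in> \<sigma>!i" using v vi unfolding NN_def by auto
  have iB': "i' < length \<sigma>" "B' \<in> \<sigma>!i'" using w wi unfolding NN_def by auto
  show False
  proof (cases i i' rule: linorder_cases)
    case less
    have "kap \<sigma> i' e < kap \<sigma> i e" using kap_gt[OF g less iB'(1) iB'(2)] e2 wi by simp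
    then show False using k vi wi by simp
  next
    case greater
    have "kap \<sigma> i e < kap \<sigma> i' e" using kap_gt[OF g greater iB(1) iB(2)] e1 vi by simp
    then show False using k vi wi by simp
  next
    case equal
    then have "B \<noteq> B'" using vw vi wi by simp
    moreover have "dep B B'" using e1 e2 vi wi unfolding dep_def by auto
    moreover have "indep (\<sigma>!i)" using g iB(1) unfolding good_def by simp
    ultimately show False using iB iB' equal unfolding indep_def by blast
  qed
qed

lemma card_KK:
  assumes g: "good \<gamma> \<kappa> \<sigma>" and v: "v \<in> NN \<sigma>"
  shows "card (KK \<sigma> v) = 4"
proof -
  have "snd v \<in> \<sigma>!(fst v)" "fst v < length \<sigma>" using v unfolding NN_def by auto
  then have "snd v \<in> C4 \<gamma> \<kappa>" using g unfolding good_def by blast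
  moreover have "inj_on (\<lambda>e. (e, kap \<sigma> (fst v) e)) (sc (snd v))" by (auto simp: inj_on_def)
  ultimately show ?thesis unfolding KK_def by (simp add: card_image card_sc)
qed

lemma card_Kall: "good \<gamma> \<kappa> \<sigma> \<Longrightarrow> card (Kall \<sigma>) = 4 * card (NN \<sigma>)"
proof -
  assume g: "good \<gamma> \<kappa> \<sigma>"
  have "card (Kall \<sigma>) = (\<Sum>v\<in>NN \<sigma>. card (KK \<sigma> v))"
    unfolding Kall_def
  proof (rule card_UN_disjoint)
    show "finite (NN \<sigma>)" by (rule finite_NN[OF g])
    show "\<forall>v\<in>NN \<sigma>. finite (KK \<sigma> v)" unfolding KK_def using finite_sc by blast
    show "\<forall>v\<in>NN \<sigma>. \<forall>w\<in>NN \<sigma>. v \<noteq> w \<longrightarrow> KK \<sigma> v \<inter> KK \<sigma> w = {}" using KK_disj[OF g] by blast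
  qed
  also have "\<dots> = (\<Sum>v\<in>NN \<sigma>. 4)" using card_KK[OF g] by simp
  finally show ?thesis by simp
qed

lemma card_NN: "good \<gamma> \<kappa> \<sigma> \<Longrightarrow> card (NN \<sigma>) = sum_list (map card \<sigma>)"
proof -
  assume g: "good \<gamma> \<kappa> \<sigma>"
  have "card (NN \<sigma>) = (\<Sum>i<length \<sigma>. card (\<sigma>!i))"
    unfolding NN_def using good_fin[OF g] by (subst card_SigmaI) auto
  also have "\<dots> = sum_list (map card \<sigma>)"
    by (simp add: sum_list_sum_nth atLeast0LessThan)
  finally show ?thesis .
qed

definition Ff :: "nat \<Rightarrow> nat \<Rightarrow> cand set list \<Rightarrow> ((edge \<times> nat) \<Rightarrow> val) set" where
  "Ff m Z \<sigma> = {f \<in> PiE (Kall \<sigma>) (\<lambda>_. Vs m Z). \<forall>v\<in>NN \<sigma>. active Z (\<lambda>e. f (e, kap \<sigma> (fst v) e)) (snd v)}"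

definition Fv :: "nat \<Rightarrow> nat \<Rightarrow> cand set list \<Rightarrow> nat \<times> cand \<Rightarrow> ((edge \<times> nat) \<Rightarrow> val) set" where
  "Fv m Z \<sigma> v = {g \<in> PiE (KK \<sigma> v) (\<lambda>_. Vs m Z). active Z (\<lambda>e. g (e, kap \<sigma> (fst v) e)) (snd v)}"

lemma finite_c4set: "finite (c4set m Z)"
proof -
  have "c4set m Z \<subseteq> Vs m Z \<times> Vs m Z \<times> Vs m Z \<times> Vs m Z" unfolding c4set_def by auto
  then show ?thesis using Vs_fin finite_subset by blast
qed

lemma card_Fv:
  assumes g: "good \<gamma> \<kappa> \<sigma>" and v: "v \<in> NN \<sigma>"
  shows "card (Fv m Z \<sigma> v) \<le> card (c4set m Z)"
proof -
  obtain i B where vi: "v = (i,B)" by (cases v)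
  have BC: "B \<in> C4 \<gamma> \<kappa>" using g v vi unfolding NN_def good_def by auto
  obtain j1 i1 j2 i2 where Bd: "B = (j1,i1,j2,i2)" by (cases B)
  let ?x = "\<lambda>e. (e, kap \<sigma> i e)"
  let ?h = "\<lambda>g. (g (?x (i1,j1)), g (?x (i1,j2)), g (?x (i2,j1)), g (?x (i2,j2)))"
  have KKe: "KK \<sigma> v = {?x (i1,j1), ?x (i1,j2), ?x (i2,j1), ?x (i2,j2)}"
    unfolding KK_def vi Bd sc_def by auto
  show ?thesis
  proof (rule card_inj_on_le[of ?h])
    show "finite (c4set m Z)" by (rule finite_c4set)
    show "inj_on ?h (Fv m Z \<sigma> v)"
    proof (rule inj_onI)
      fix g g' assume gg: "g \<in> Fv m Z \<sigma> v" "g' \<in> Fv m Z \<sigma> v" and h: "?h g = ?h g'"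
      have "g \<in> PiE (KK \<sigma> v) (\<lambda>_. Vs m Z)" "g' \<in> PiE (KK \<sigma> v) (\<lambda>_. Vs m Z)"
        using gg unfolding Fv_def by auto
      then show "g = g'"
        by (rule PiE_ext) (use h KKe in auto)
    qed
    show "?h ` Fv m Z \<sigma> v \<subseteq> c4set m Z"
    proof
      fix y assume "y \<in> ?h ` Fv m Z \<sigma> v"
      then obtain g where g: "g \<in> Fv m Z \<sigma> v" and y: "y = ?h g" by blast
      have gP: "g \<in> PiE (KK \<sigma> v) (\<lambda>_. Vs m Z)" and ga: "active Z (\<lambda>e. g (?x e)) B"
        using g vi unfolding Fv_def by auto
      have vals: "g (?x (i1,j1)) \<in> Vs m Z" "g (?x (i1,j2)) \<in> Vs m Z" "g (?x (i2,j1)) \<in> Vs m Z"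
        "g (?x (i2,j2)) \<in> Vs m Z" using gP KKe by (auto simp: PiE_def Pi_def)
      show "y \<in> c4set m Z" using ga vals unfolding y c4set_def Bd active_def by simp
    qed
  qed
qed

lemma card_Ff:
  assumes g: "good \<gamma> \<kappa> \<sigma>"
  shows "card (Ff m Z \<sigma>) \<le> card (c4set m Z) ^ card (NN \<sigma>)"
proof -
  let ?r = "\<lambda>f. \<lambda>v\<in>NN \<sigma>. restrict f (KK \<sigma> v)"
  have "card (Ff m Z \<sigma>) \<le> card (PiE (NN \<sigma>) (Fv m Z \<sigma>))"
  proof (rule card_inj_on_le[of ?r])
    show "finite (PiE (NN \<sigma>) (Fv m Z \<sigma>))"
    proof (rule finite_PiE[OF finite_NN[OF g]])
      fix v assume "v \<in> NN \<sigma>"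
      have "Fv m Z \<sigma> v \<subseteq> PiE (KK \<sigma> v) (\<lambda>_. Vs m Z)" unfolding Fv_def by auto
      moreover have "finite (PiE (KK \<sigma> v) (\<lambda>_. Vs m Z))"
        using finite_PiE[of "KK \<sigma> v" "\<lambda>_. Vs m Z"] Vs_fin finite_sc unfolding KK_def by blast
      ultimately show "finite (Fv m Z \<sigma> v)" using finite_subset by blast
    qed
    show "inj_on ?r (Ff m Z \<sigma>)"
    proof (rule inj_onI)
      fix f f' assume ff: "f \<in> Ff m Z \<sigma>" "f' \<in> Ff m Z \<sigma>" and r: "?r f = ?r f'"
      have P: "f \<in> PiE (Kall \<sigma>) (\<lambda>_. Vs m Z)" "f' \<in> PiE (Kall \<sigma>) (\<lambda>_. Vs m Z)"
        using ff unfolding Ff_def by auto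
      show "f = f'"
      proof (rule PiE_ext[OF P])
        fix x assume "x \<in> Kall \<sigma>"
        then obtain v where v: "v \<in> NN \<sigma>" "x \<in> KK \<sigma> v" unfolding Kall_def by blast
        have "?r f v x = ?r f' v x" using r by simp
        then show "f x = f' x" using v by simp
      qed
    qed
    show "?r ` Ff m Z \<sigma> \<subseteq> PiE (NN \<sigma>) (Fv m Z \<sigma>)"
    proof
      fix y assume "y \<in> ?r ` Ff m Z \<sigma>"
      then obtain f where f: "f \<in> Ff m Z \<sigma>" and y: "y = ?r f" by blast
      have fP: "f \<in> PiE (Kall \<sigma>) (\<lambda>_. Vs m Z)" and fa: "\<forall>v\<in>NN \<sigma>. active Z (\<lambda>e. f (e, kap \<sigma> (fst v) e)) (snd v)"
        using f unfolding Ff_def by auto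
      show "y \<in> PiE (NN \<sigma>) (Fv m Z \<sigma>)"
        unfolding y restrict_PiE_iff
      proof (intro ballI)
        fix v assume v: "v \<in> NN \<sigma>"
        have sub: "KK \<sigma> v \<subseteq> Kall \<sigma>" using v unfolding Kall_def by blast
        have "restrict f (KK \<sigma> v) \<in> PiE (KK \<sigma> v) (\<lambda>_. Vs m Z)"
          using fP sub by (auto simp: PiE_def Pi_def)
        moreover have "active Z (\<lambda>e. restrict f (KK \<sigma> v) (e, kap \<sigma> (fst v) e)) (snd v)"
        proof -
          have "\<And>e. e \<in> sc (snd v) \<Longrightarrow> restrict f (KK \<sigma> v) (e, kap \<sigma> (fst v) e) = f (e, kap \<sigma> (fst v) e)"
            unfolding KK_def by simp
          then show ?thesis using fa v active_local[of "snd v" "\<lambda>e. restrict f (KK \<sigma> v) (e, kap \<sigma> (fst v) e)"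
              "\<lambda>e. f (e, kap \<sigma> (fst v) e)" Z] by blast
        qed
        ultimately show "restrict f (KK \<sigma> v) \<in> Fv m Z \<sigma> v" unfolding Fv_def by blast
      qed
    qed
  qed
  also have "\<dots> = (\<Prod>v\<in>NN \<sigma>. card (Fv m Z \<sigma> v))" by (rule card_PiE[OF finite_NN[OF g]])
  also have "\<dots> \<le> (\<Prod>v\<in>NN \<sigma>. card (c4set m Z))"
    by (rule prod_mono) (use card_Fv[OF g] in auto)
  also have "\<dots> = card (c4set m Z) ^ card (NN \<sigma>)" by simp
  finally show ?thesis .
qed

lemma Ev_bound:
  assumes Z: "Z \<ge> 1" and g: "good \<gamma> \<kappa> \<sigma>"
  shows "emeasure (table_space m Z) (Ev Z \<sigma>) \<le>
    ennreal ((card (c4set m Z) / card (Vs m Z) ^ 4) ^ sum_list (map card \<sigma>))"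
proof -
  have "emeasure (table_space m Z) (Ev Z \<sigma>) \<le>
      ennreal (card (Ff m Z \<sigma>) * (1 / card (Vs m Z)) ^ card (Kall \<sigma>))"
  proof (rule cover_bound[OF Z finite_Kall[OF g]])
    show "Ff m Z \<sigma> \<subseteq> PiE (Kall \<sigma>) (\<lambda>_. Vs m Z)" unfolding Ff_def by blast
    fix \<omega> assume w: "\<omega> \<in> Ev Z \<sigma>" and vals: "\<forall>x\<in>Kall \<sigma>. \<omega> x \<in> Vs m Z"
    have "restrict \<omega> (Kall \<sigma>) \<in> PiE (Kall \<sigma>) (\<lambda>_. Vs m Z)" using vals by auto
    moreover have "\<forall>v\<in>NN \<sigma>. active Z (\<lambda>e. restrict \<omega> (Kall \<sigma>) (e, kap \<sigma> (fst v) e)) (snd v)"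
    proof
      fix v assume v: "v \<in> NN \<sigma>"
      then have a: "active Z (\<lambda>e. \<omega> (e, kap \<sigma> (fst v) e)) (snd v)"
        using w unfolding Ev_def NN_def by auto
      have "\<And>e. e \<in> sc (snd v) \<Longrightarrow> restrict \<omega> (Kall \<sigma>) (e, kap \<sigma> (fst v) e) = \<omega> (e, kap \<sigma> (fst v) e)"
        using v unfolding Kall_def KK_def by auto
      then show "active Z (\<lambda>e. restrict \<omega> (Kall \<sigma>) (e, kap \<sigma> (fst v) e)) (snd v)"
        using a active_local[of "snd v" "\<lambda>e. restrict \<omega> (Kall \<sigma>) (e, kap \<sigma> (fst v) e)"
              "\<lambda>e. \<omega> (e, kap \<sigma> (fst v) e)" Z] by blast
    qed
    ultimately show "restrict \<omega> (Kall \<sigma>) \<in> Ff m Z \<sigma>" unfolding Ff_def by blast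
  qed
  also have "card (Ff m Z \<sigma>) * (1 / card (Vs m Z)) ^ card (Kall \<sigma>) \<le>
      card (c4set m Z) ^ card (NN \<sigma>) * (1 / card (Vs m Z)) ^ card (Kall \<sigma>)"
    by (intro mult_right_mono) (use card_Ff[OF g, of m Z] in \<open>simp_all add: of_nat_le_iff[symmetric]\<close>)
  also have "\<dots> = (card (c4set m Z) / card (Vs m Z) ^ 4) ^ sum_list (map card \<sigma>)"
  proof -
    let ?N = "sum_list (map card \<sigma>)"
    let ?v = "real (card (Vs m Z))" and ?c = "real (card (c4set m Z))"
    have "(1 / ?v) ^ (4 * ?N) = ((1 / ?v) ^ 4) ^ ?N" by (simp add: power_mult)
    then have "?c ^ ?N * (1 / ?v) ^ (4 * ?N) = (?c * (1 / ?v) ^ 4) ^ ?N" by (simp add: power_mult_distrib)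
    also have "?c * (1 / ?v) ^ 4 = ?c / ?v ^ 4" by (simp add: power_one_over)
    finally show ?thesis unfolding card_Kall[OF g] card_NN[OF g] by simp
  qed
  finally show ?thesis by (simp add: ennreal_leI)
qed

lemma Ev_sets:
  assumes g: "good \<gamma> \<kappa> \<sigma>"
  shows "Ev Z \<sigma> \<in> sets (table_space m Z)"
proof -
  let ?G = "{f \<in> PiE (Kall \<sigma>) (\<lambda>_. UNIV). \<forall>v\<in>NN \<sigma>. active Z (\<lambda>e. f (e, kap \<sigma> (fst v) e)) (snd v)}"
  have eq: "Ev Z \<sigma> = (\<Union>f\<in>?G. {\<omega>. \<forall>x\<in>Kall \<sigma>. \<omega> x = f x})"
  proof (intro set_eqI iffI)
    fix \<omega> assume w: "\<omega> \<in> Ev Z \<sigma>"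
    have "restrict \<omega> (Kall \<sigma>) \<in> ?G"
    proof (intro CollectI conjI ballI)
      show "restrict \<omega> (Kall \<sigma>) \<in> PiE (Kall \<sigma>) (\<lambda>_. UNIV)" by simp
      fix v assume v: "v \<in> NN \<sigma>"
      then have a: "active Z (\<lambda>e. \<omega> (e, kap \<sigma> (fst v) e)) (snd v)"
        using w unfolding Ev_def NN_def by auto
      have "\<And>e. e \<in> sc (snd v) \<Longrightarrow> restrict \<omega> (Kall \<sigma>) (e, kap \<sigma> (fst v) e) = \<omega> (e, kap \<sigma> (fst v) e)"
        using v unfolding Kall_def KK_def by auto
      then show "active Z (\<lambda>e. restrict \<omega> (Kall \<sigma>) (e, kap \<sigma> (fst v) e)) (snd v)"
        using a active_local[of "snd v" "\<lambda>e. restrict \<omega> (Kall \<sigma>) (e, kap \<sigma> (fst v) e)"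
              "\<lambda>e. \<omega> (e, kap \<sigma> (fst v) e)" Z] by blast
    qed
    moreover have "\<omega> \<in> {\<omega>'. \<forall>x\<in>Kall \<sigma>. \<omega>' x = restrict \<omega> (Kall \<sigma>) x}" by simp
    ultimately show "\<omega> \<in> (\<Union>f\<in>?G. {\<omega>. \<forall>x\<in>Kall \<sigma>. \<omega> x = f x})" by blast
  next
    fix \<omega> assume "\<omega> \<in> (\<Union>f\<in>?G. {\<omega>. \<forall>x\<in>Kall \<sigma>. \<omega> x = f x})"
    then obtain f where f: "f \<in> ?G" and wf: "\<forall>x\<in>Kall \<sigma>. \<omega> x = f x" by blast
    show "\<omega> \<in> Ev Z \<sigma>" unfolding Ev_def
    proof (intro CollectI allI impI ballI)
      fix i B assume i: "i < length \<sigma>" and B: "B \<in> \<sigma>!i"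
      then have v: "(i,B) \<in> NN \<sigma>" unfolding NN_def by simp
      then have a: "active Z (\<lambda>e. f (e, kap \<sigma> i e)) B" using f by auto
      have "\<And>e. e \<in> sc B \<Longrightarrow> \<omega> (e, kap \<sigma> i e) = f (e, kap \<sigma> i e)"
        using v wf unfolding Kall_def KK_def by auto
      then show "active Z (\<lambda>e. \<omega> (e, kap \<sigma> i e)) B"
        using a active_local[of B "\<lambda>e. \<omega> (e, kap \<sigma> i e)" "\<lambda>e. f (e, kap \<sigma> i e)" Z] by blast
    qed
  qed
  have "countable ?G"
  proof (rule countable_subset[of _ "PiE (Kall \<sigma>) (\<lambda>_. UNIV)"])
    show "?G \<subseteq> PiE (Kall \<sigma>) (\<lambda>_. UNIV)" by blast
    show "countable (PiE (Kall \<sigma>) (\<lambda>_. UNIV :: val set))"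
      by (rule countable_PiE[OF finite_Kall[OF g]]) simp
  qed
  moreover have "(\<lambda>f. {\<omega>. \<forall>x\<in>Kall \<sigma>. \<omega> x = f x}) ` ?G \<subseteq> sets (table_space m Z)"
    using cyl_sets[OF finite_Kall[OF g]] by blast
  ultimately show ?thesis unfolding eq by (rule sets.countable_UN')
qed


definition callseq :: "nat \<Rightarrow> cand list \<Rightarrow> (edge \<times> nat \<Rightarrow> val) \<Rightarrow> nat \<Rightarrow> cand option" where
  "callseq Z cs \<omega> n = snd (mt_step Z cs \<omega> (mt_state Z cs \<omega> n))"

lemma state_0: "mt_state Z cs \<omega> 0 = (\<lambda>_. 0, [])"
  by (simp add: mt_state_def)

lemma state_Suc: "mt_state Z cs \<omega> (Suc n) = fst (mt_step Z cs \<omega> (mt_state Z cs \<omega> n))"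
  by (simp add: mt_state_def)

lemma find_some_mem: "find P xs = Some x \<Longrightarrow> x \<in> set xs \<and> P x"
  by (auto simp: find_Some_iff)

lemma step_cnt: "fst (fst (mt_step Z cs \<omega> st)) =
    (case snd (mt_step Z cs \<omega> st) of None \<Rightarrow> fst st | Some c \<Rightarrow> bump (fst st) c)"
  by (cases st) (auto simp: mt_step_def split: list.splits option.splits)

lemma step_stack_None: "snd (mt_step Z cs \<omega> st) = None \<Longrightarrow> snd (fst (mt_step Z cs \<omega> st)) = tl (snd st)"
  by (cases st) (auto simp: mt_step_def split: list.splits option.splits)

lemma step_call: "snd (mt_step Z cs \<omega> st) = Some c \<Longrightarrow> c \<in> set cs \<and> active Z (assign \<omega> (fst st)) c"
  by (cases st) (auto simp: mt_step_def split: list.splits option.splits dest!: find_some_mem)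

lemma step_halt: "snd st = [] \<Longrightarrow> snd (mt_step Z cs \<omega> st) = None \<Longrightarrow>
    (\<forall>c\<in>set cs. \<not> active Z (assign \<omega> (fst st)) c)"
  by (cases st) (auto simp: mt_step_def find_None_iff split: option.splits)

lemma cnt_state: "fst (mt_state Z cs \<omega> n) = cntf (callseq Z cs \<omega>) n"
proof (induction n)
  case 0
  show ?case by (simp add: state_0 cntf_def)
next
  case (Suc n)
  let ?call = "callseq Z cs \<omega>"
  have set_eq: "\<And>e. {s. s < Suc n \<and> (\<exists>c. ?call s = Some c \<and> e \<in> sc c)} =
     {s. s < n \<and> (\<exists>c. ?call s = Some c \<and> e \<in> sc c)} \<union>
     (if (\<exists>c. ?call n = Some c \<and> e \<in> sc c) then {n} else {})"
    by (auto simp: less_Suc_eq)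
  have cS: "\<And>e. cntf ?call (Suc n) e = cntf ?call n e + (if (\<exists>c. ?call n = Some c \<and> e \<in> sc c) then 1 else 0)"
    unfolding cntf_def set_eq by (auto simp: card_Un_disjoint)
  show ?case
  proof (rule ext)
    fix e
    show "fst (mt_state Z cs \<omega> (Suc n)) e = cntf ?call (Suc n) e"
      unfolding state_Suc step_cnt cS Suc.IH[symmetric]
      by (cases "?call n") (auto simp: callseq_def bump_def)
  qed
qed

lemma call_props:
  assumes "callseq Z cs \<omega> s = Some c"
  shows "c \<in> set cs \<and> active Z (\<lambda>e. \<omega> (e, cntf (callseq Z cs \<omega>) s e)) c"
  using step_call[OF assms[unfolded callseq_def]] cnt_state[of Z cs \<omega> s]
  by (simp add: assign_def)

lemma stab_good: "stab U I Ls \<Longrightarrow> i < length Ls \<Longrightarrow> Ls!i \<subseteq> U \<and> indep (Ls!i)"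
proof (induction Ls arbitrary: I i)
  case Nil then show ?case by simp
next
  case (Cons L Ls)
  then show ?case by (cases i) (auto simp: Valid_def)
qed

lemma good_Cons:
  assumes "A \<in> C4 \<gamma> \<kappa>" "stab (C4 \<gamma> \<kappa>) {A} Ls"
  shows "good \<gamma> \<kappa> ({A} # Ls)"
  unfolding good_def
proof (intro allI impI)
  fix i assume i: "i < length ({A} # Ls)"
  show "({A} # Ls) ! i \<subseteq> C4 \<gamma> \<kappa> \<and> indep (({A} # Ls) ! i)"
  proof (cases i)
    case 0 then show ?thesis using assms(1) by (simp add: indep_def)
  next
    case (Suc j) then show ?thesis using stab_good[OF assms(2), of j] i by simp
  qed
qed

context
  fixes \<gamma> \<kappa> m Z :: nat and cs :: "cand list" and p \<mu> :: real
  assumes Z: "Z \<ge> 1" and cs: "set cs = C4 \<gamma> \<kappa>"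
    and p: "p = card (c4set m Z) / card (Vs m Z) ^ 4" and mu: "0 \<le> \<mu>"
    and KP: "\<And>I. I \<subseteq> C4 \<gamma> \<kappa> \<Longrightarrow> indep I \<Longrightarrow>
       p ^ card I * (\<Sum>L\<in>insert {} (Valid (C4 \<gamma> \<kappa>) I). \<mu> ^ card L) \<le> \<mu> ^ card I"
begin

private abbreviation "U \<equiv> C4 \<gamma> \<kappa>"
private abbreviation "T \<equiv> table_space m Z"

definition gT :: "cand \<Rightarrow> nat \<Rightarrow> (edge \<times> nat \<Rightarrow> val) \<Rightarrow> ennreal" where
  "gT A n \<omega> = (\<Sum>Ls\<in>Sn U {A} n. indicator (Ev Z ({A} # Ls)) \<omega>)"

definition GA :: "cand \<Rightarrow> (edge \<times> nat \<Rightarrow> val) \<Rightarrow> ennreal" where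
  "GA A \<omega> = (SUP n. gT A n \<omega>)"

lemma p_nonneg: "0 \<le> p" using p by simp

lemma gT_meas: "A \<in> U \<Longrightarrow> gT A n \<in> borel_measurable T"
  unfolding gT_def
  by (intro borel_measurable_sum borel_measurable_indicator Ev_sets good_Cons) (auto simp: Sn_def)

lemma GA_meas: "A \<in> U \<Longrightarrow> GA A \<in> borel_measurable T"
  unfolding GA_def using gT_meas by (intro borel_measurable_SUP) auto

lemma gT_mono: "incseq (\<lambda>n. gT A n \<omega>)"
proof (rule incseq_SucI)
  fix n
  show "gT A n \<omega> \<le> gT A (Suc n) \<omega>"
    unfolding gT_def
  proof (rule sum_mono2)
    show "finite (Sn U {A} (Suc n))" by (rule finite_Sn[OF finite_C4])
    show "Sn U {A} n \<subseteq> Sn U {A} (Suc n)" unfolding Sn_def by auto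
  qed auto
qed

lemma gT_integral: "A \<in> U \<Longrightarrow> (\<integral>\<^sup>+ \<omega>. gT A n \<omega> \<partial>T) \<le> ennreal \<mu>"
proof -
  assume A: "A \<in> U"
  have meas: "\<And>Ls. Ls \<in> Sn U {A} n \<Longrightarrow> Ev Z ({A} # Ls) \<in> sets T"
    using A by (intro Ev_sets good_Cons) (auto simp: Sn_def)
  have "(\<integral>\<^sup>+ \<omega>. gT A n \<omega> \<partial>T) = (\<Sum>Ls\<in>Sn U {A} n. \<integral>\<^sup>+ \<omega>. indicator (Ev Z ({A} # Ls)) \<omega> \<partial>T)"
    unfolding gT_def by (rule nn_integral_sum) (use meas in simp)
  also have "\<dots> = (\<Sum>Ls\<in>Sn U {A} n. emeasure T (Ev Z ({A} # Ls)))"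
    using meas by (intro sum.cong refl nn_integral_indicator) simp
  also have "\<dots> \<le> (\<Sum>Ls\<in>Sn U {A} n. ennreal (p * wt p Ls))"
  proof (rule sum_mono)
    fix Ls assume "Ls \<in> Sn U {A} n"
    then have g: "good \<gamma> \<kappa> ({A} # Ls)" using A by (intro good_Cons) (auto simp: Sn_def)
    show "emeasure T (Ev Z ({A} # Ls)) \<le> ennreal (p * wt p Ls)"
      using Ev_bound[OF Z g, of m] unfolding p[symmetric] by (simp add: wt_def)
  qed
  also have "\<dots> = ennreal (\<Sum>Ls\<in>Sn U {A} n. p * wt p Ls)"
    by (rule sum_ennreal) (use p_nonneg in \<open>simp add: wt_def\<close>)
  also have "\<dots> = ennreal (p * (\<Sum>Ls\<in>Sn U {A} n. wt p Ls))"
    by (simp only: sum_distrib_left)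
  also have "\<dots> \<le> ennreal \<mu>"
  proof (rule ennreal_leI)
    have "p ^ card {A} * (\<Sum>Ls\<in>Sn U {A} n. wt p Ls) \<le> \<mu> ^ card {A}"
      by (rule H_bound[OF finite_C4 p_nonneg mu KP]) (use A in \<open>auto simp: indep_def\<close>)
    then show "p * (\<Sum>Ls\<in>Sn U {A} n. wt p Ls) \<le> \<mu>" by simp
  qed
  finally show ?thesis .
qed

lemma GA_integral: "A \<in> U \<Longrightarrow> (\<integral>\<^sup>+ \<omega>. GA A \<omega> \<partial>T) \<le> ennreal \<mu>"
proof -
  assume A: "A \<in> U"
  have "(\<integral>\<^sup>+ \<omega>. GA A \<omega> \<partial>T) = (SUP n. \<integral>\<^sup>+ \<omega>. gT A n \<omega> \<partial>T)"
    unfolding GA_def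
  proof (rule nn_integral_monotone_convergence_SUP)
    show "incseq (\<lambda>n \<omega>. gT A n \<omega>)" using gT_mono by (auto simp: incseq_def le_fun_def)
    show "\<And>n. gT A n \<in> borel_measurable T" using gT_meas[OF A] .
  qed
  also have "\<dots> \<le> ennreal \<mu>" using gT_integral[OF A] by (intro SUP_least) auto
  finally show ?thesis .
qed

lemma count_le_gT:
  assumes A: "A \<in> U"
  shows "of_nat (card {t. t < n \<and> callseq Z cs \<omega> t = Some A}) \<le> gT A n \<omega>"
proof -
  let ?call = "callseq Z cs \<omega>"
  let ?S = "{Ls \<in> Sn U {A} n. \<omega> \<in> Ev Z ({A} # Ls)}"
  have inU: "\<And>s c. ?call s = Some c \<Longrightarrow> c \<in> U" using call_props cs by blast
  have act: "\<And>s c. ?call s = Some c \<Longrightarrow> active Z (\<lambda>e. \<omega> (e, cntf ?call s e)) c"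
    using call_props by blast
  have cle: "card {t. t < n \<and> ?call t = Some A} \<le> card ?S"
  proof (rule card_inj_on_le[of "\<lambda>t. tl (wit ?call t)"])
    show "finite ?S" using finite_Sn[OF finite_C4] by simp
    show "inj_on (\<lambda>t. tl (wit ?call t)) {t. t < n \<and> ?call t = Some A}"
    proof (rule inj_onI)
      fix t1 t2 assume t1: "t1 \<in> {t. t < n \<and> ?call t = Some A}" and t2: "t2 \<in> {t. t < n \<and> ?call t = Some A}"
        and eq: "tl (wit ?call t1) = tl (wit ?call t2)"
      have c1: "?call t1 = Some A" and c2: "?call t2 = Some A" using t1 t2 by auto
      have "wit ?call t1 = wit ?call t2"
        using eq wit_Cons[of ?call t1 A, OF c1] wit_Cons[of ?call t2 A, OF c2] by simp
      show "t1 = t2"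
      proof (rule ccontr)
        assume "t1 \<noteq> t2"
        then consider "t1 < t2" | "t2 < t1" by linarith
        then show False
        proof cases
          case 1 then show False using wit_inj[of ?call t1 A t2, OF c1 c2] \<open>wit ?call t1 = wit ?call t2\<close> by blast
        next
          case 2 then show False using wit_inj[of ?call t2 A t1, OF c2 c1] \<open>wit ?call t1 = wit ?call t2\<close> by simp
        qed
      qed
    qed
    show "(\<lambda>t. tl (wit ?call t)) ` {t. t < n \<and> ?call t = Some A} \<subseteq> ?S"
    proof
      fix y assume "y \<in> (\<lambda>t. tl (wit ?call t)) ` {t. t < n \<and> ?call t = Some A}"
      then obtain t where t: "t < n" "?call t = Some A" and y: "y = tl (wit ?call t)" by blast
      have w: "wit ?call t = {A} # y" using wit_Cons[of ?call t A, OF t(2)] y by simp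
      have "stab U {A} y" using stab_wit[of ?call t A U, OF t(2) inU] y by simp
      moreover have "length y \<le> n" using length_wit[of ?call t A, OF t(2)] w t(1) by simp
      moreover have "\<omega> \<in> Ev Z ({A} # y)" using wit_Ev[of ?call t A Z \<omega>, OF t(2) act] w by simp
      ultimately show "y \<in> ?S" by (simp add: Sn_def)
    qed
  qed
  have eqG: "of_nat (card ?S) = gT A n \<omega>"
  proof -
    have "gT A n \<omega> = (\<Sum>Ls\<in>Sn U {A} n. if \<omega> \<in> Ev Z ({A} # Ls) then 1 else 0)"
      unfolding gT_def by (intro sum.cong refl) (simp add: indicator_def)
    also have "\<dots> = (\<Sum>Ls\<in>?S. 1)"
      by (rule sum.inter_filter[symmetric]) (rule finite_Sn[OF finite_C4])
    finally show ?thesis by simp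
  qed
  have "(of_nat (card {t. t < n \<and> ?call t = Some A}) :: ennreal) \<le> of_nat (card ?S)"
    by (rule of_nat_mono[OF cle])
  then show ?thesis using eqG by simp
qed

lemma resample_le_GA:
  assumes A: "A \<in> U"
  shows "resample_count Z cs \<omega> A \<le> GA A \<omega>"
proof -
  have "resample_count Z cs \<omega> A = (SUP n. \<Sum>t<n. if callseq Z cs \<omega> t = Some A then 1 else 0)"
    unfolding resample_count_def callseq_def[symmetric] by (rule suminf_eq_SUP)
  also have "\<dots> = (SUP n. of_nat (card {t. t < n \<and> callseq Z cs \<omega> t = Some A}))"
  proof (rule SUP_cong[OF refl])
    fix n
    have "(\<Sum>t<n. if callseq Z cs \<omega> t = Some A then 1 else 0 :: ennreal) = (\<Sum>t\<in>{t. t < n \<and> callseq Z cs \<omega> t = Some A}. 1)"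
      by (simp add: sum.inter_filter[symmetric] lessThan_def Collect_conj_eq[symmetric])
    then show "(\<Sum>t<n. if callseq Z cs \<omega> t = Some A then 1 else 0 :: ennreal) =
        of_nat (card {t. t < n \<and> callseq Z cs \<omega> t = Some A})" by simp
  qed
  also have "\<dots> \<le> GA A \<omega>" unfolding GA_def
    by (intro SUP_mono) (use count_le_gT[OF A] in blast)
  finally show ?thesis .
qed

lemma finite_calls:
  assumes A: "A \<in> U" and fin: "GA A \<omega> \<noteq> \<infinity>"
  shows "finite {t. callseq Z cs \<omega> t = Some A}"
proof (rule ccontr)
  assume inf: "infinite {t. callseq Z cs \<omega> t = Some A}"
  have "GA A \<omega> < top" using fin by (simp add: less_top[symmetric])
  then obtain k where k: "GA A \<omega> < of_nat k" using ennreal_Ex_less_of_nat by blast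
  obtain S where S: "S \<subseteq> {t. callseq Z cs \<omega> t = Some A}" "finite S" "card S = k"
    using infinite_arbitrarily_large[OF inf] by blast
  define n where "n = Suc (Max (insert 0 S))"
  have Sn: "S \<subseteq> {t. t < n \<and> callseq Z cs \<omega> t = Some A}"
  proof
    fix t assume t: "t \<in> S"
    have "t \<le> Max (insert 0 S)" using S(2) t by (intro Max_ge) auto
    then show "t \<in> {t. t < n \<and> callseq Z cs \<omega> t = Some A}" using t S(1) unfolding n_def by auto
  qed
  have fn: "finite {t. t < n \<and> callseq Z cs \<omega> t = Some A}"
    by (rule finite_subset[of _ "{..<n}"]) auto
  have "k \<le> card {t. t < n \<and> callseq Z cs \<omega> t = Some A}"
    using card_mono[OF fn Sn] S(3) by simp
  then have "(of_nat k :: ennreal) \<le> of_nat (card {t. t < n \<and> callseq Z cs \<omega> t = Some A})"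
    by (rule of_nat_mono)
  also have "\<dots> \<le> gT A n \<omega>" by (rule count_le_gT[OF A])
  also have "gT A n \<omega> \<le> GA A \<omega>" unfolding GA_def by (rule SUP_upper) simp
  finally show False using k by simp
qed

lemma terminates_if:
  assumes N: "\<And>n. n \<ge> N \<Longrightarrow> callseq Z cs \<omega> n = None"
  shows "mt_terminates Z cs \<omega>"
proof -
  let ?l = "\<lambda>n. length (snd (mt_state Z cs \<omega> n))"
  have l: "?l (N + k) = ?l N - k" for k
  proof (induction k)
    case 0 then show ?case by simp
  next
    case (Suc k)
    have "snd (mt_state Z cs \<omega> (N + Suc k)) = tl (snd (mt_state Z cs \<omega> (N + k)))"
      using step_stack_None[of Z cs \<omega> "mt_state Z cs \<omega> (N + k)"] N[of "N + k"]
      by (simp add: state_Suc callseq_def)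
    then show ?case using Suc.IH by simp
  qed
  let ?n = "N + ?l N"
  have "snd (mt_state Z cs \<omega> ?n) = []" using l[of "?l N"] by simp
  moreover have "callseq Z cs \<omega> ?n = None" using N by simp
  ultimately have "mt_halted Z cs \<omega> ?n"
    unfolding mt_halted_def using step_halt[of "mt_state Z cs \<omega> ?n" Z cs \<omega>]
    by (simp add: callseq_def)
  then show ?thesis unfolding mt_terminates_def by blast
qed

lemma good_run:
  assumes fin: "\<forall>A\<in>U. GA A \<omega> \<noteq> \<infinity>"
  shows "mt_terminates Z cs \<omega> \<and> (\<forall>c\<in>C4 \<gamma> \<kappa>. \<not> active Z (mt_output Z cs \<omega>) c)"
proof -
  have sub: "{t. callseq Z cs \<omega> t \<noteq> None} \<subseteq> (\<Union>A\<in>U. {t. callseq Z cs \<omega> t = Some A})"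
    using call_props cs by fastforce
  have "finite (\<Union>A\<in>U. {t. callseq Z cs \<omega> t = Some A})"
    using finite_C4 finite_calls fin by blast
  then have f: "finite {t. callseq Z cs \<omega> t \<noteq> None}" using sub finite_subset by blast
  define N where "N = Suc (Max (insert 0 {t. callseq Z cs \<omega> t \<noteq> None}))"
  have "\<And>n. n \<ge> N \<Longrightarrow> callseq Z cs \<omega> n = None"
  proof (rule ccontr)
    fix n assume "n \<ge> N" "callseq Z cs \<omega> n \<noteq> None"
    then have "n \<le> Max (insert 0 {t. callseq Z cs \<omega> t \<noteq> None})" using f by (intro Max_ge) auto
    then show False using \<open>n \<ge> N\<close> unfolding N_def by simp
  qed
  then have trm: "mt_terminates Z cs \<omega>" by (rule terminates_if)
  then have "mt_halted Z cs \<omega> (LEAST n. mt_halted Z cs \<omega> n)"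
    unfolding mt_terminates_def by (rule LeastI_ex)
  then have "\<forall>c\<in>set cs. \<not> active Z (mt_output Z cs \<omega>) c"
    unfolding mt_halted_def mt_output_def by blast
  then show ?thesis using trm cs by simp
qed

theorem MT_main:
  "(AE \<omega> in T. mt_terminates Z cs \<omega> \<and> (\<forall>c\<in>C4 \<gamma> \<kappa>. \<not> active Z (mt_output Z cs \<omega>) c))
   \<and> (\<Sum>c\<in>C4 \<gamma> \<kappa>. \<integral>\<^sup>+ \<omega>. resample_count Z cs \<omega> c \<partial>T) \<le> ennreal (card (C4 \<gamma> \<kappa>) * \<mu>)"
proof
  have "AE \<omega> in T. \<forall>A\<in>U. GA A \<omega> \<noteq> \<infinity>"
  proof (rule AE_finite_allI[OF finite_C4])
    fix A assume A: "A \<in> U"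
    show "AE \<omega> in T. GA A \<omega> \<noteq> \<infinity>"
      by (rule nn_integral_PInf_AE[OF GA_meas[OF A]]) (use GA_integral[OF A] in \<open>auto simp: top_unique\<close>)
  qed
  then show "AE \<omega> in T. mt_terminates Z cs \<omega> \<and> (\<forall>c\<in>C4 \<gamma> \<kappa>. \<not> active Z (mt_output Z cs \<omega>) c)"
    by (rule AE_mp) (auto intro!: AE_I2 good_run)
next
  have "(\<Sum>c\<in>C4 \<gamma> \<kappa>. \<integral>\<^sup>+ \<omega>. resample_count Z cs \<omega> c \<partial>T) \<le> (\<Sum>c\<in>C4 \<gamma> \<kappa>. ennreal \<mu>)"
  proof (rule sum_mono)
    fix c assume c: "c \<in> C4 \<gamma> \<kappa>"
    have "(\<integral>\<^sup>+ \<omega>. resample_count Z cs \<omega> c \<partial>T) \<le> (\<integral>\<^sup>+ \<omega>. GA c \<omega> \<partial>T)"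
      by (rule nn_integral_mono) (rule resample_le_GA[OF c])
    also have "\<dots> \<le> ennreal \<mu>" by (rule GA_integral[OF c])
    finally show "(\<integral>\<^sup>+ \<omega>. resample_count Z cs \<omega> c \<partial>T) \<le> ennreal \<mu>" .
  qed
  also have "\<dots> = ennreal (card (C4 \<gamma> \<kappa>) * \<mu>)" using mu by (simp add: ennreal_mult' ennreal_of_nat_eq_real_of_nat)
  finally show "(\<Sum>c\<in>C4 \<gamma> \<kappa>. \<integral>\<^sup>+ \<omega>. resample_count Z cs \<omega> c \<partial>T) \<le> ennreal (card (C4 \<gamma> \<kappa>) * \<mu>)" .
qed

end


definition Pairs :: "nat \<Rightarrow> (nat \<times> nat) set" where "Pairs n = {(a,b). a < b \<and> b < n}"

lemma finite_Pairs: "finite (Pairs n)"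
proof -
  have "Pairs n \<subseteq> {..<n} \<times> {..<n}" unfolding Pairs_def by auto
  then show ?thesis using finite_subset by blast
qed

lemma card_Pairs: "card (Pairs n) = n choose 2"
proof (induction n)
  case 0 show ?case by (simp add: Pairs_def)
next
  case (Suc n)
  have eq: "Pairs (Suc n) = Pairs n \<union> (\<lambda>a. (a,n)) ` {..<n}" by (auto simp: Pairs_def less_Suc_eq)
  have dj: "Pairs n \<inter> (\<lambda>a. (a,n)) ` {..<n} = {}" by (auto simp: Pairs_def)
  have "card (Pairs (Suc n)) = card (Pairs n) + card ((\<lambda>a. (a,n)) ` {..<n})"
    unfolding eq by (rule card_Un_disjoint) (use finite_Pairs dj in auto)
  also have "card ((\<lambda>a. (a,n)) ` {..<n}) = n" by (subst card_image) (auto simp: inj_on_def)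
  finally have c: "card (Pairs (Suc n)) = card (Pairs n) + n" .
  have "(Suc n choose 2) = (n choose 1) + (n choose 2)" by (simp add: numeral_2_eq_2)
  then show ?case using Suc.IH c by simp
qed

lemma card_pairs_contain:
  assumes "x < n"
  shows "card {p\<in>Pairs n. fst p = x \<or> snd p = x} \<le> n - 1"
proof -
  let ?f = "\<lambda>p. if fst p = x then snd p else fst p"
  have "card {p\<in>Pairs n. fst p = x \<or> snd p = x} \<le> card ({..<n} - {x})"
  proof (rule card_inj_on_le[of ?f])
    show "inj_on ?f {p\<in>Pairs n. fst p = x \<or> snd p = x}"
      by (auto simp: inj_on_def Pairs_def split: if_splits)
    show "?f ` {p\<in>Pairs n. fst p = x \<or> snd p = x} \<subseteq> {..<n} - {x}"
      by (auto simp: Pairs_def)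
  qed auto
  also have "\<dots> = n - 1" using assms by simp
  finally show ?thesis .
qed

lemma card_pairs_contain_not:
  assumes "x < n" "y < n" "x \<noteq> y"
  shows "card {p\<in>Pairs n. (fst p = x \<or> snd p = x) \<and> fst p \<noteq> y \<and> snd p \<noteq> y} \<le> n - 2"
proof -
  let ?f = "\<lambda>p. if fst p = x then snd p else fst p"
  have "card {p\<in>Pairs n. (fst p = x \<or> snd p = x) \<and> fst p \<noteq> y \<and> snd p \<noteq> y} \<le> card ({..<n} - {x, y})"
  proof (rule card_inj_on_le[of ?f])
    show "inj_on ?f {p\<in>Pairs n. (fst p = x \<or> snd p = x) \<and> fst p \<noteq> y \<and> snd p \<noteq> y}"
      by (auto simp: inj_on_def Pairs_def split: if_splits)
    show "?f ` {p\<in>Pairs n. (fst p = x \<or> snd p = x) \<and> fst p \<noteq> y \<and> snd p \<noteq> y} \<subseteq> {..<n} - {x, y}"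
      by (auto simp: Pairs_def)
  qed auto
  also have "\<dots> = n - 2" using assms by (simp add: card_Diff_subset)
  finally show ?thesis .
qed

lemma card_pairs_meet:
  assumes "x < y" "y < n"
  shows "card {p\<in>Pairs n. fst p = x \<or> snd p = x \<or> fst p = y \<or> snd p = y} \<le> 2 * n - 3"
proof -
  have "{p\<in>Pairs n. fst p = x \<or> snd p = x \<or> fst p = y \<or> snd p = y} \<subseteq>
     {p\<in>Pairs n. fst p = x \<or> snd p = x} \<union> {p\<in>Pairs n. (fst p = y \<or> snd p = y) \<and> fst p \<noteq> x \<and> snd p \<noteq> x}"
    by auto
  then have "card {p\<in>Pairs n. fst p = x \<or> snd p = x \<or> fst p = y \<or> snd p = y} \<le>
     card ({p\<in>Pairs n. fst p = x \<or> snd p = x} \<union> {p\<in>Pairs n. (fst p = y \<or> snd p = y) \<and> fst p \<noteq> x \<and> snd p \<noteq> x})"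
    by (rule card_mono[rotated]) (use finite_Pairs in auto)
  also have "\<dots> \<le> card {p\<in>Pairs n. fst p = x \<or> snd p = x} + card {p\<in>Pairs n. (fst p = y \<or> snd p = y) \<and> fst p \<noteq> x \<and> snd p \<noteq> x}"
    by (rule card_Un_le)
  also have "\<dots> \<le> (n - 1) + (n - 2)"
    using card_pairs_contain[of x n] card_pairs_contain_not[of y n x] assms by (intro add_mono) auto
  finally show ?thesis using assms by simp
qed

definition rp :: "cand \<Rightarrow> nat \<times> nat" where "rp B = (fst (snd B), snd (snd (snd B)))"
definition cp :: "cand \<Rightarrow> nat \<times> nat" where "cp B = (fst B, fst (snd (snd B)))"

lemma card_C4_prod:
  "card {B\<in>C4 \<gamma> \<kappa>. R (rp B) \<and> Q (cp B)} \<le> card {p\<in>Pairs \<gamma>. R p} * card {p\<in>Pairs \<kappa>. Q p}"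
proof -
  let ?f = "\<lambda>B. (rp B, cp B)"
  have "card {B\<in>C4 \<gamma> \<kappa>. R (rp B) \<and> Q (cp B)} \<le> card ({p\<in>Pairs \<gamma>. R p} \<times> {p\<in>Pairs \<kappa>. Q p})"
  proof (rule card_inj_on_le[of ?f])
    show "inj_on ?f {B\<in>C4 \<gamma> \<kappa>. R (rp B) \<and> Q (cp B)}"
      by (auto simp: inj_on_def rp_def cp_def)
    show "?f ` {B\<in>C4 \<gamma> \<kappa>. R (rp B) \<and> Q (cp B)} \<subseteq> {p\<in>Pairs \<gamma>. R p} \<times> {p\<in>Pairs \<kappa>. Q p}"
      by (auto simp: rp_def cp_def C4_def Pairs_def)
    show "finite ({p\<in>Pairs \<gamma>. R p} \<times> {p\<in>Pairs \<kappa>. Q p})" using finite_Pairs by simp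
  qed
  also have "\<dots> = card {p\<in>Pairs \<gamma>. R p} * card {p\<in>Pairs \<kappa>. Q p}" by (rule card_cartesian_product)
  finally show ?thesis .
qed

lemma card_C4: "card (C4 \<gamma> \<kappa>) \<le> (\<gamma> choose 2) * (\<kappa> choose 2)"
  using card_C4_prod[of \<gamma> \<kappa> "\<lambda>_. True" "\<lambda>_. True"] by (simp add: card_Pairs)

lemma mem_sc: "(i,j) \<in> sc B \<longleftrightarrow> (i = fst (rp B) \<or> i = snd (rp B)) \<and> (j = fst (cp B) \<or> j = snd (cp B))"
  by (cases B) (auto simp: sc_def rp_def cp_def)

definition Gam :: "nat \<Rightarrow> nat \<Rightarrow> cand \<Rightarrow> cand set" where
  "Gam \<gamma> \<kappa> B = {B'\<in>C4 \<gamma> \<kappa>. dep B' B}"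

lemma card_Gam:
  assumes B: "B \<in> C4 \<gamma> \<kappa>"
  shows "card (Gam \<gamma> \<kappa> B) \<le> (2*\<gamma>-3) * (2*\<kappa>-3)"
proof -
  obtain j1 i1 j2 i2 where Bd: "B = (j1,i1,j2,i2)" by (cases B)
  have c: "i1 < i2" "i2 < \<gamma>" "j1 < j2" "j2 < \<kappa>" using B Bd unfolding C4_def by auto
  have "Gam \<gamma> \<kappa> B \<subseteq> {B'\<in>C4 \<gamma> \<kappa>. (\<lambda>p. fst p = i1 \<or> snd p = i1 \<or> fst p = i2 \<or> snd p = i2) (rp B') \<and>
      (\<lambda>p. fst p = j1 \<or> snd p = j1 \<or> fst p = j2 \<or> snd p = j2) (cp B')}"
  proof
    fix B' assume "B' \<in> Gam \<gamma> \<kappa> B"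
    then have B': "B' \<in> C4 \<gamma> \<kappa>" and "dep B' B" unfolding Gam_def by auto
    then obtain e where "e \<in> sc B'" "e \<in> sc B" unfolding dep_def by auto
    then show "B' \<in> {B'\<in>C4 \<gamma> \<kappa>. (\<lambda>p. fst p = i1 \<or> snd p = i1 \<or> fst p = i2 \<or> snd p = i2) (rp B') \<and>
      (\<lambda>p. fst p = j1 \<or> snd p = j1 \<or> fst p = j2 \<or> snd p = j2) (cp B')}"
      using B' mem_sc[of "fst e" "snd e" B'] mem_sc[of "fst e" "snd e" B] Bd
      by (auto simp: rp_def cp_def)
  qed
  then have "card (Gam \<gamma> \<kappa> B) \<le> card {B'\<in>C4 \<gamma> \<kappa>. (\<lambda>p. fst p = i1 \<or> snd p = i1 \<or> fst p = i2 \<or> snd p = i2) (rp B') \<and>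
      (\<lambda>p. fst p = j1 \<or> snd p = j1 \<or> fst p = j2 \<or> snd p = j2) (cp B')}"
    by (rule card_mono[rotated]) (use finite_C4 in auto)
  also have "\<dots> \<le> card {p\<in>Pairs \<gamma>. fst p = i1 \<or> snd p = i1 \<or> fst p = i2 \<or> snd p = i2} *
       card {p\<in>Pairs \<kappa>. fst p = j1 \<or> snd p = j1 \<or> fst p = j2 \<or> snd p = j2}"
    by (rule card_C4_prod)
  also have "\<dots> \<le> (2*\<gamma>-3) * (2*\<kappa>-3)"
    by (intro mult_le_mono card_pairs_meet) (use c in auto)
  finally show ?thesis .
qed

lemma sum_Pow_power:
  fixes \<mu> :: real
  shows "finite X \<Longrightarrow> (\<Sum>L\<in>Pow X. \<mu> ^ card L) = (1 + \<mu>) ^ card X"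
proof (induction X rule: finite_induct)
  case empty then show ?case by simp
next
  case (insert x X)
  have fP: "finite (Pow X)" using insert by simp
  have dj: "Pow X \<inter> insert x ` Pow X = {}" using insert by auto
  have inj: "inj_on (insert x) (Pow X)" using insert by (auto simp: inj_on_def)
  have "(\<Sum>L\<in>Pow (insert x X). \<mu> ^ card L) = (\<Sum>L\<in>Pow X. \<mu> ^ card L) + (\<Sum>L\<in>insert x ` Pow X. \<mu> ^ card L)"
    unfolding Pow_insert by (rule sum.union_disjoint) (use fP dj in auto)
  also have "(\<Sum>L\<in>insert x ` Pow X. \<mu> ^ card L) = (\<Sum>L\<in>Pow X. \<mu> ^ card (insert x L))"
    by (rule sum.reindex[OF inj, unfolded comp_def])
  also have "\<dots> = (\<Sum>L\<in>Pow X. \<mu> * \<mu> ^ card L)"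
  proof (rule sum.cong[OF refl])
    fix L assume "L \<in> Pow X"
    then have "finite L" "x \<notin> L" using insert finite_subset by auto
    then show "\<mu> ^ card (insert x L) = \<mu> * \<mu> ^ card L" by simp
  qed
  finally show ?case using insert by (simp add: sum_distrib_left[symmetric] algebra_simps)
qed

lemma pow_rearr: "(p * a ^ D) ^ k = (p::real) ^ k * a ^ (k * D)"
  by (simp add: power_mult_distrib power_mult[symmetric] mult.commute)

lemma KP1:
  fixes p \<mu> :: real
  assumes p: "0 \<le> p" and mu: "0 \<le> \<mu>" and key: "p * (1 + \<mu>) ^ ((2*\<gamma>-3) * (2*\<kappa>-3)) \<le> \<mu>"
    and I: "I \<subseteq> C4 \<gamma> \<kappa>"
  shows "p ^ card I * (\<Sum>L\<in>insert {} (Valid (C4 \<gamma> \<kappa>) I). \<mu> ^ card L) \<le> \<mu> ^ card I"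
proof -
  let ?D = "(2*\<gamma>-3) * (2*\<kappa>-3)"
  let ?G = "\<Union>B\<in>I. Gam \<gamma> \<kappa> B"
  have fI: "finite I" using I finite_C4 finite_subset by blast
  have fG: "finite ?G" unfolding Gam_def using fI finite_C4 by auto
  have sub: "insert {} (Valid (C4 \<gamma> \<kappa>) I) \<subseteq> Pow ?G"
    unfolding Valid_def Gam_def by auto
  have "(\<Sum>L\<in>insert {} (Valid (C4 \<gamma> \<kappa>) I). \<mu> ^ card L) \<le> (\<Sum>L\<in>Pow ?G. \<mu> ^ card L)"
    by (rule sum_mono2) (use fG sub mu in auto)
  also have "\<dots> = (1 + \<mu>) ^ card ?G" by (rule sum_Pow_power[OF fG])
  also have "\<dots> \<le> (1 + \<mu>) ^ (card I * ?D)"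
  proof (rule power_increasing)
    have "card ?G \<le> (\<Sum>B\<in>I. card (Gam \<gamma> \<kappa> B))" by (rule card_UN_le[OF fI])
    also have "\<dots> \<le> (\<Sum>B\<in>I. ?D)" by (rule sum_mono) (use card_Gam I in blast)
    finally show "card ?G \<le> card I * ?D" by simp
  qed (use mu in simp)
  finally have s: "(\<Sum>L\<in>insert {} (Valid (C4 \<gamma> \<kappa>) I). \<mu> ^ card L) \<le> (1 + \<mu>) ^ (card I * ?D)" .
  have "p ^ card I * (\<Sum>L\<in>insert {} (Valid (C4 \<gamma> \<kappa>) I). \<mu> ^ card L) \<le> p ^ card I * (1 + \<mu>) ^ (card I * ?D)"
    by (rule mult_left_mono[OF s]) (simp add: p)
  also have "\<dots> = (p * (1 + \<mu>) ^ ?D) ^ card I" by (rule pow_rearr[symmetric])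
  also have "\<dots> \<le> \<mu> ^ card I" by (rule power_mono[OF key]) (use p mu in simp)
  finally show ?thesis .
qed


definition lexle :: "edge \<Rightarrow> edge \<Rightarrow> bool" where
  "lexle e e' \<longleftrightarrow> fst e < fst e' \<or> (fst e = fst e' \<and> snd e \<le> snd e')"

definition lexmin :: "edge set \<Rightarrow> edge" where
  "lexmin S = (let i = Min (fst ` S) in (i, Min (snd ` {e\<in>S. fst e = i})))"

lemma lexmin_mem:
  assumes "finite S" "S \<noteq> {}"
  shows "lexmin S \<in> S"
proof -
  let ?i = "Min (fst ` S)"
  have "?i \<in> fst ` S" using assms by (intro Min_in) auto
  then have ne: "{e\<in>S. fst e = ?i} \<noteq> {}" by force
  have "Min (snd ` {e\<in>S. fst e = ?i}) \<in> snd ` {e\<in>S. fst e = ?i}"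
    using assms ne by (intro Min_in) auto
  then obtain e where "e \<in> S" "fst e = ?i" "snd e = Min (snd ` {e\<in>S. fst e = ?i})" by auto
  then have "lexmin S = e" unfolding lexmin_def Let_def by (cases e) auto
  then show ?thesis using \<open>e \<in> S\<close> by simp
qed

lemma lexmin_le:
  assumes "finite S" "e' \<in> S"
  shows "lexle (lexmin S) e'"
proof -
  let ?i = "Min (fst ` S)"
  have i: "?i \<le> fst e'" using assms by (intro Min_le) auto
  show ?thesis
  proof (cases "fst e' = ?i")
    case True
    then have "Min (snd ` {e\<in>S. fst e = ?i}) \<le> snd e'" using assms by (intro Min_le) auto
    then show ?thesis using True unfolding lexle_def lexmin_def Let_def by simp
  next
    case False
    then show ?thesis using i unfolding lexle_def lexmin_def Let_def by simp
  qed
qed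


definition EI :: "cand set \<Rightarrow> edge set" where "EI I = (\<Union>B\<in>I. sc B)"
definition fe :: "cand set \<Rightarrow> cand \<Rightarrow> edge" where "fe I B' = lexmin (sc B' \<inter> EI I)"
definition fL :: "cand set \<Rightarrow> cand set \<Rightarrow> edge \<Rightarrow> cand option" where
  "fL I L = (\<lambda>e\<in>EI I. if \<exists>B'\<in>L. fe I B' = e then Some (THE B'. B' \<in> L \<and> fe I B' = e) else None)"
definition Aset :: "nat \<Rightarrow> nat \<Rightarrow> cand set \<Rightarrow> edge \<Rightarrow> cand set" where
  "Aset \<gamma> \<kappa> I e = {B'\<in>C4 \<gamma> \<kappa>. e \<in> sc B' \<and> (\<forall>e'\<in>sc B' \<inter> EI I. lexle e e')}"
definition Aloc :: "nat \<Rightarrow> nat \<Rightarrow> cand \<Rightarrow> edge \<Rightarrow> cand set" where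
  "Aloc \<gamma> \<kappa> B e = {B'\<in>C4 \<gamma> \<kappa>. e \<in> sc B' \<and> (\<forall>e'\<in>sc B' \<inter> sc B. lexle e e')}"
definition w1 :: "real \<Rightarrow> cand option \<Rightarrow> real" where
  "w1 \<mu> x = (case x of None \<Rightarrow> 1 | Some _ \<Rightarrow> \<mu>)"

lemma prod_if_pow:
  fixes \<mu> :: real
  assumes "finite E" "S \<subseteq> E"
  shows "(\<Prod>e\<in>E. if e \<in> S then \<mu> else 1) = \<mu> ^ card S"
proof -
  have "(\<Prod>e\<in>E. if e \<in> S then \<mu> else 1) = (\<Prod>e\<in>E \<inter> {e. e \<in> S}. \<mu>) * (\<Prod>e\<in>E \<inter> - {e. e \<in> S}. 1)"
    by (rule prod.If_cases[OF assms(1)])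
  also have "E \<inter> {e. e \<in> S} = S" using assms(2) by auto
  finally show ?thesis by simp
qed

context
  fixes \<gamma> \<kappa> :: nat and I L :: "cand set"
  assumes I: "I \<subseteq> C4 \<gamma> \<kappa>" "indep I" and L: "L \<in> insert {} (Valid (C4 \<gamma> \<kappa>) I)"
begin

lemma fin_EI: "finite (EI I)" unfolding EI_def using I finite_C4 finite_subset finite_sc by blast

lemma L_props: "L \<subseteq> C4 \<gamma> \<kappa>" "indep L" "\<And>B'. B' \<in> L \<Longrightarrow> \<exists>B\<in>I. dep B' B"
  using L unfolding Valid_def indep_def by auto

lemma fe_mem: "B' \<in> L \<Longrightarrow> fe I B' \<in> sc B' \<inter> EI I"
proof -
  assume B': "B' \<in> L"
  obtain B where "B \<in> I" "dep B' B" using L_props(3)[OF B'] by blast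
  then have "sc B' \<inter> EI I \<noteq> {}" unfolding dep_def EI_def by blast
  then show ?thesis unfolding fe_def using fin_EI by (intro lexmin_mem) auto
qed

lemma fe_le: "B' \<in> L \<Longrightarrow> e' \<in> sc B' \<inter> EI I \<Longrightarrow> lexle (fe I B') e'"
  unfolding fe_def using fin_EI by (intro lexmin_le) auto

lemma fe_uniq: "B1 \<in> L \<Longrightarrow> B2 \<in> L \<Longrightarrow> fe I B1 = fe I B2 \<Longrightarrow> B1 = B2"
proof (rule ccontr)
  assume B: "B1 \<in> L" "B2 \<in> L" "fe I B1 = fe I B2" "B1 \<noteq> B2"
  have "dep B1 B2" using fe_mem[OF B(1)] fe_mem[OF B(2)] B(3) unfolding dep_def by auto
  then show False using L_props(2) B unfolding indep_def by blast
qed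

lemma fL_Some: "B' \<in> L \<Longrightarrow> fL I L (fe I B') = Some B'"
proof -
  assume B': "B' \<in> L"
  have "(THE B''. B'' \<in> L \<and> fe I B'' = fe I B') = B'"
    using fe_uniq B' by (intro the_equality) auto
  then show ?thesis unfolding fL_def using fe_mem[OF B'] B' by auto
qed

lemma fL_SomeD: "fL I L e = Some B' \<Longrightarrow> e \<in> EI I \<Longrightarrow> B' \<in> L \<and> fe I B' = e"
proof -
  assume f: "fL I L e = Some B'" and e: "e \<in> EI I"
  then have ex: "\<exists>B''\<in>L. fe I B'' = e" using f unfolding fL_def by (auto split: if_splits)
  then obtain B0 where B0: "B0 \<in> L" "fe I B0 = e" by blast
  have "(THE B''. B'' \<in> L \<and> fe I B'' = e) = B0" using fe_uniq B0 by (intro the_equality) auto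
  then have "B' = B0" using f e ex unfolding fL_def by auto
  then show ?thesis using B0 e by simp
qed

lemma fL_PiE: "fL I L \<in> PiE (EI I) (\<lambda>e. insert None (Some ` Aset \<gamma> \<kappa> I e))"
proof -
  have "fL I L e \<in> insert None (Some ` Aset \<gamma> \<kappa> I e)" if e: "e \<in> EI I" for e
  proof (cases "fL I L e")
    case None then show ?thesis by simp
  next
    case (Some B')
    then have B': "B' \<in> L" "fe I B' = e" using fL_SomeD e by auto
    have "B' \<in> Aset \<gamma> \<kappa> I e"
      unfolding Aset_def using B' fe_mem[OF B'(1)] fe_le[OF B'(1)] L_props(1) by auto
    then show ?thesis using Some by simp
  qed
  moreover have "fL I L \<in> extensional (EI I)" unfolding fL_def by simp
  ultimately show ?thesis by (auto simp: PiE_def Pi_def)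
qed

lemma L_recover: "L = {B'. \<exists>e\<in>EI I. fL I L e = Some B'}"
proof (intro set_eqI iffI)
  fix B' assume "B' \<in> L"
  then show "B' \<in> {B'. \<exists>e\<in>EI I. fL I L e = Some B'}" using fL_Some fe_mem by blast
next
  fix B' assume "B' \<in> {B'. \<exists>e\<in>EI I. fL I L e = Some B'}"
  then show "B' \<in> L" using fL_SomeD by blast
qed

lemma weight_eq: "\<mu> ^ card L = (\<Prod>e\<in>EI I. w1 \<mu> (fL I L e))"
proof -
  have "(\<Prod>e\<in>EI I. w1 \<mu> (fL I L e)) = (\<Prod>e\<in>EI I. if e \<in> fe I ` L then \<mu> else 1)"
  proof (rule prod.cong[OF refl])
    fix e assume e: "e \<in> EI I"
    show "w1 \<mu> (fL I L e) = (if e \<in> fe I ` L then \<mu> else 1)"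
    proof (cases "fL I L e")
      case None
      then have "e \<notin> fe I ` L" using fL_Some by force
      then show ?thesis using None by (simp add: w1_def)
    next
      case (Some B')
      then have "B' \<in> L \<and> fe I B' = e" using fL_SomeD e by blast
      then have "e \<in> fe I ` L" by (metis image_eqI)
      then show ?thesis using Some by (simp add: w1_def)
    qed
  qed
  also have "\<dots> = \<mu> ^ card (fe I ` L)"
    by (rule prod_if_pow[OF fin_EI]) (use fe_mem in blast)
  also have "card (fe I ` L) = card L"
    by (rule card_image) (use fe_uniq in \<open>auto simp: inj_on_def\<close>)
  finally show ?thesis by simp
qed

end

lemma fL_inj:
  assumes I: "I \<subseteq> C4 \<gamma> \<kappa>" "indep I"
  shows "inj_on (fL I) (insert {} (Valid (C4 \<gamma> \<kappa>) I))"
proof (rule inj_onI)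
  fix L1 L2 assume L1: "L1 \<in> insert {} (Valid (C4 \<gamma> \<kappa>) I)" and L2: "L2 \<in> insert {} (Valid (C4 \<gamma> \<kappa>) I)"
    and eq: "fL I L1 = fL I L2"
  show "L1 = L2" using L_recover[OF I L1] L_recover[OF I L2] eq by simp
qed

lemma sum_w1:
  assumes "finite A"
  shows "(\<Sum>x\<in>insert None (Some ` A). w1 \<mu> x) = 1 + \<mu> * card A"
proof -
  have "(\<Sum>x\<in>insert None (Some ` A). w1 \<mu> x) = w1 \<mu> None + (\<Sum>x\<in>Some ` A. w1 \<mu> x)"
    using assms by (subst sum.insert) auto
  also have "(\<Sum>x\<in>Some ` A. w1 \<mu> x) = (\<Sum>x\<in>A. w1 \<mu> (Some x))" by (simp add: sum.reindex)
  finally show ?thesis by (simp add: w1_def)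
qed

lemma fin_Aset: "finite (Aset \<gamma> \<kappa> I e)"
  unfolding Aset_def using finite_C4 by simp

lemma indep_sum_bound:
  fixes \<mu> :: real
  assumes I: "I \<subseteq> C4 \<gamma> \<kappa>" "indep I" and mu: "0 \<le> \<mu>"
  shows "(\<Sum>L\<in>insert {} (Valid (C4 \<gamma> \<kappa>) I). \<mu> ^ card L) \<le>
         (\<Prod>B\<in>I. \<Prod>e\<in>sc B. (1 + \<mu> * card (Aloc \<gamma> \<kappa> B e)))"
proof -
  let ?X = "insert {} (Valid (C4 \<gamma> \<kappa>) I)"
  let ?E = "EI I"
  let ?S = "\<lambda>e. insert None (Some ` Aset \<gamma> \<kappa> I e)"
  let ?W = "\<lambda>f. \<Prod>e\<in>?E. w1 \<mu> (f e)"
  have fE: "finite ?E" unfolding EI_def using I finite_C4 finite_subset finite_sc by blast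
  have fX: "finite ?X" using finite_Valid[OF finite_C4] by simp
  have Wnn: "\<And>f. 0 \<le> ?W f" using mu by (intro prod_nonneg) (auto simp: w1_def split: option.splits)
  have "(\<Sum>L\<in>?X. \<mu> ^ card L) = (\<Sum>L\<in>?X. ?W (fL I L))"
    using weight_eq[OF I] by (intro sum.cong refl) blast
  also have "\<dots> = (\<Sum>f\<in>fL I ` ?X. ?W f)"
    by (rule sum.reindex[OF fL_inj[OF I], symmetric, unfolded comp_def])
  also have "\<dots> \<le> (\<Sum>f\<in>PiE ?E ?S. ?W f)"
  proof (rule sum_mono2)
    show "finite (PiE ?E ?S)" using fE fin_Aset by (intro finite_PiE) auto
    show "fL I ` ?X \<subseteq> PiE ?E ?S" by (rule image_subsetI) (rule fL_PiE[OF I])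
    show "\<And>f. f \<in> PiE ?E ?S - fL I ` ?X \<Longrightarrow> 0 \<le> ?W f" by (rule Wnn)
  qed
  also have "\<dots> = (\<Prod>e\<in>?E. \<Sum>x\<in>?S e. w1 \<mu> x)"
    by (rule prod_sum_PiE[symmetric]) (use fE fin_Aset in blast)+
  also have "\<dots> = (\<Prod>e\<in>?E. 1 + \<mu> * card (Aset \<gamma> \<kappa> I e))"
    using sum_w1[OF fin_Aset] by simp
  also have "\<dots> = (\<Prod>B\<in>I. \<Prod>e\<in>sc B. 1 + \<mu> * card (Aset \<gamma> \<kappa> I e))"
    unfolding EI_def
  proof (rule prod.UNION_disjoint)
    show "finite I" using I finite_C4 finite_subset by blast
    show "\<forall>B\<in>I. finite (sc B)" using finite_sc by blast
    show "\<forall>B\<in>I. \<forall>B'\<in>I. B \<noteq> B' \<longrightarrow> sc B \<inter> sc B' = {}"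
      using I(2) unfolding indep_def dep_def by blast
  qed
  also have "\<dots> \<le> (\<Prod>B\<in>I. \<Prod>e\<in>sc B. 1 + \<mu> * card (Aloc \<gamma> \<kappa> B e))"
  proof (rule prod_mono, rule conjI)
    fix B assume B: "B \<in> I"
    show "0 \<le> (\<Prod>e\<in>sc B. 1 + \<mu> * card (Aset \<gamma> \<kappa> I e))" using mu by (intro prod_nonneg) auto
    show "(\<Prod>e\<in>sc B. 1 + \<mu> * card (Aset \<gamma> \<kappa> I e)) \<le> (\<Prod>e\<in>sc B. 1 + \<mu> * card (Aloc \<gamma> \<kappa> B e))"
    proof (rule prod_mono, rule conjI)
      fix e assume e: "e \<in> sc B"
      show "0 \<le> 1 + \<mu> * card (Aset \<gamma> \<kappa> I e)" using mu by simp
      have "Aset \<gamma> \<kappa> I e \<subseteq> Aloc \<gamma> \<kappa> B e"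
        unfolding Aset_def Aloc_def EI_def using B by blast
      then have "card (Aset \<gamma> \<kappa> I e) \<le> card (Aloc \<gamma> \<kappa> B e)"
        by (rule card_mono[rotated]) (simp add: Aloc_def finite_C4)
      then show "1 + \<mu> * card (Aset \<gamma> \<kappa> I e) \<le> 1 + \<mu> * card (Aloc \<gamma> \<kappa> B e)"
        using mu by (simp add: mult_left_mono)
    qed
  qed
  finally show ?thesis .
qed


lemma num4:
  fixes a b \<mu> :: real
  assumes a: "a \<ge> 1" and b: "b \<ge> 1" and ab: "a + b \<ge> 3" and mu: "\<mu> \<ge> 0"
  shows "(1 + \<mu>*(a*b)) * ((1 + \<mu>*(a*(b-1))) * ((1 + \<mu>*((a-1)*b)) * (1 + \<mu>*((a-1)*(b-1)))))
         \<le> (1 + (a*b-1)*\<mu>) ^ 4"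
proof -
  define x where "x = 1 + (a*b-1)*\<mu>"
  have ab1: "a*b \<ge> 1" using a b by (metis mult_mono' mult_1 zero_le_one order_trans)
  have x0: "x \<ge> 0" unfolding x_def using ab1 mu by simp
  have f14: "(1 + \<mu>*(a*b)) * (1 + \<mu>*((a-1)*(b-1))) = x^2 - (a+b-3)*\<mu>*x - (a+b-2)*\<mu>^2"
    unfolding x_def by (simp add: algebra_simps power2_eq_square)
  have t1: "0 \<le> (a+b-3)*\<mu>*x" using ab mu x0 by simp
  have t2: "0 \<le> (a+b-2)*\<mu>^2" using ab by simp
  have h14: "(1 + \<mu>*(a*b)) * (1 + \<mu>*((a-1)*(b-1))) \<le> x^2" using f14 t1 t2 by linarith
  have n14: "0 \<le> (1 + \<mu>*(a*b)) * (1 + \<mu>*((a-1)*(b-1)))" using a b mu by simp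
  have h2: "1 + \<mu>*(a*(b-1)) \<le> x"
  proof -
    have "\<mu>*(a*(b-1)) = \<mu>*(a*b) - \<mu>*a" by (simp add: algebra_simps)
    moreover have "\<mu> \<le> \<mu>*a" using a mu by (simp add: mult_le_cancel_left1)
    ultimately show ?thesis unfolding x_def by (simp add: algebra_simps)
  qed
  have h3: "1 + \<mu>*((a-1)*b) \<le> x"
  proof -
    have "\<mu>*((a-1)*b) = \<mu>*(a*b) - \<mu>*b" by (simp add: algebra_simps)
    moreover have "\<mu> \<le> \<mu>*b" using b mu by (simp add: mult_le_cancel_left1)
    ultimately show ?thesis unfolding x_def by (simp add: algebra_simps)
  qed
  have n2: "0 \<le> 1 + \<mu>*(a*(b-1))" using a b mu by simp
  have n3: "0 \<le> 1 + \<mu>*((a-1)*b)" using a b mu by simp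
  have h23: "(1 + \<mu>*(a*(b-1))) * (1 + \<mu>*((a-1)*b)) \<le> x * x"
    by (rule mult_mono[OF h2 h3 x0 n3])
  have "(1 + \<mu>*(a*b)) * ((1 + \<mu>*(a*(b-1))) * ((1 + \<mu>*((a-1)*b)) * (1 + \<mu>*((a-1)*(b-1)))))
     = ((1 + \<mu>*(a*b)) * (1 + \<mu>*((a-1)*(b-1)))) * ((1 + \<mu>*(a*(b-1))) * (1 + \<mu>*((a-1)*b)))"
    by (simp add: algebra_simps)
  also have "\<dots> \<le> x^2 * (x * x)"
    by (rule mult_mono[OF h14 h23]) (use x0 n2 n3 in simp_all)
  also have "\<dots> = x ^ 4" by (simp add: power2_eq_square power4_eq_xxxx)
  finally show ?thesis unfolding x_def .
qed

lemma Aloc_D: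
  assumes "B' \<in> Aloc \<gamma> \<kappa> B e"
  shows "B' \<in> C4 \<gamma> \<kappa>" "e \<in> sc B'" "\<And>e'. e' \<in> sc B' \<Longrightarrow> e' \<in> sc B \<Longrightarrow> lexle e e'"
  using assms unfolding Aloc_def by auto

lemma card_Aloc_le:
  assumes sub: "Aloc \<gamma> \<kappa> B e \<subseteq> {B'\<in>C4 \<gamma> \<kappa>. R (rp B') \<and> Q (cp B')}"
    and r: "card {p\<in>Pairs \<gamma>. R p} \<le> r" and q: "card {p\<in>Pairs \<kappa>. Q p} \<le> s"
  shows "card (Aloc \<gamma> \<kappa> B e) \<le> r * s"
proof -
  have "card (Aloc \<gamma> \<kappa> B e) \<le> card {B'\<in>C4 \<gamma> \<kappa>. R (rp B') \<and> Q (cp B')}"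
    by (rule card_mono[OF _ sub]) (simp add: finite_C4)
  also have "\<dots> \<le> card {p\<in>Pairs \<gamma>. R p} * card {p\<in>Pairs \<kappa>. Q p}" by (rule card_C4_prod)
  also have "\<dots> \<le> r * s" by (rule mult_le_mono[OF r q])
  finally show ?thesis .
qed

lemma Aloc_prod:
  fixes \<mu> :: real
  assumes B: "B \<in> C4 \<gamma> \<kappa>" and mu: "0 \<le> \<mu>" and g: "\<gamma> \<ge> 2" "\<kappa> \<ge> 2" "\<gamma> + \<kappa> \<ge> 5"
  shows "(\<Prod>e\<in>sc B. 1 + \<mu> * card (Aloc \<gamma> \<kappa> B e)) \<le> (1 + real (\<gamma>*\<kappa>-\<gamma>-\<kappa>) * \<mu>) ^ 4"
proof -
  obtain j1 i1 j2 i2 where Bd: "B = (j1,i1,j2,i2)" by (cases B)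
  have c: "i1 < i2" "i2 < \<gamma>" "j1 < j2" "j2 < \<kappa>" using B Bd unfolding C4_def by auto
  let ?g = "\<lambda>e. 1 + \<mu> * card (Aloc \<gamma> \<kappa> B e)"
  have scB: "sc B = {(i1,j1),(i1,j2),(i2,j1),(i2,j2)}" unfolding Bd sc_def by simp
  have inB: "\<And>i j. (i,j) \<in> sc B \<longleftrightarrow> (i = i1 \<or> i = i2) \<and> (j = j1 \<or> j = j2)" unfolding scB by auto
  have prod4: "(\<Prod>e\<in>sc B. ?g e) = ?g (i1,j1) * (?g (i1,j2) * (?g (i2,j1) * ?g (i2,j2)))"
    unfolding scB using c by simp
  let ?R = "\<lambda>x p. fst p = x \<or> snd p = x"
  let ?RN = "\<lambda>x y p. (fst p = x \<or> snd p = x) \<and> fst p \<noteq> y \<and> snd p \<noteq> y"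
  have c1: "card (Aloc \<gamma> \<kappa> B (i1,j1)) \<le> (\<gamma>-1) * (\<kappa>-1)"
  proof (rule card_Aloc_le[where R="?R i1" and Q="?R j1"])
    show "Aloc \<gamma> \<kappa> B (i1,j1) \<subseteq> {B'\<in>C4 \<gamma> \<kappa>. ?R i1 (rp B') \<and> ?R j1 (cp B')}"
    proof
      fix B' assume A: "B' \<in> Aloc \<gamma> \<kappa> B (i1,j1)"
      then show "B' \<in> {B'\<in>C4 \<gamma> \<kappa>. ?R i1 (rp B') \<and> ?R j1 (cp B')}"
        using Aloc_D[OF A] mem_sc[of i1 j1 B'] by auto
    qed
  qed (use card_pairs_contain c in auto)
  have c2: "card (Aloc \<gamma> \<kappa> B (i1,j2)) \<le> (\<gamma>-1) * (\<kappa>-2)"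
  proof (rule card_Aloc_le[where R="?R i1" and Q="?RN j2 j1"])
    show "Aloc \<gamma> \<kappa> B (i1,j2) \<subseteq> {B'\<in>C4 \<gamma> \<kappa>. ?R i1 (rp B') \<and> ?RN j2 j1 (cp B')}"
    proof
      fix B' assume A: "B' \<in> Aloc \<gamma> \<kappa> B (i1,j2)"
      have m: "(i1,j2) \<in> sc B'" using Aloc_D(2)[OF A] .
      have "\<not> (fst (cp B') = j1 \<or> snd (cp B') = j1)"
      proof
        assume "fst (cp B') = j1 \<or> snd (cp B') = j1"
        then have "(i1,j1) \<in> sc B'" using m mem_sc[of i1 j1 B'] mem_sc[of i1 j2 B'] by auto
        then have "lexle (i1,j2) (i1,j1)" using Aloc_D(3)[OF A] inB by auto
        then show False using c unfolding lexle_def by simp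
      qed
      then show "B' \<in> {B'\<in>C4 \<gamma> \<kappa>. ?R i1 (rp B') \<and> ?RN j2 j1 (cp B')}"
        using Aloc_D(1)[OF A] m mem_sc[of i1 j2 B'] by auto
    qed
  qed (use card_pairs_contain card_pairs_contain_not c in auto)
  have c3: "card (Aloc \<gamma> \<kappa> B (i2,j1)) \<le> (\<gamma>-2) * (\<kappa>-1)"
  proof (rule card_Aloc_le[where R="?RN i2 i1" and Q="?R j1"])
    show "Aloc \<gamma> \<kappa> B (i2,j1) \<subseteq> {B'\<in>C4 \<gamma> \<kappa>. ?RN i2 i1 (rp B') \<and> ?R j1 (cp B')}"
    proof
      fix B' assume A: "B' \<in> Aloc \<gamma> \<kappa> B (i2,j1)"
      have m: "(i2,j1) \<in> sc B'" using Aloc_D(2)[OF A] .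
      have "\<not> (fst (rp B') = i1 \<or> snd (rp B') = i1)"
      proof
        assume "fst (rp B') = i1 \<or> snd (rp B') = i1"
        then have "(i1,j1) \<in> sc B'" using m mem_sc[of i1 j1 B'] mem_sc[of i2 j1 B'] by auto
        then have "lexle (i2,j1) (i1,j1)" using Aloc_D(3)[OF A] inB by auto
        then show False using c unfolding lexle_def by simp
      qed
      then show "B' \<in> {B'\<in>C4 \<gamma> \<kappa>. ?RN i2 i1 (rp B') \<and> ?R j1 (cp B')}"
        using Aloc_D(1)[OF A] m mem_sc[of i2 j1 B'] by auto
    qed
  qed (use card_pairs_contain card_pairs_contain_not c in auto)
  have c4: "card (Aloc \<gamma> \<kappa> B (i2,j2)) \<le> (\<gamma>-2) * (\<kappa>-2)"
  proof (rule card_Aloc_le[where R="?RN i2 i1" and Q="?RN j2 j1"])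
    show "Aloc \<gamma> \<kappa> B (i2,j2) \<subseteq> {B'\<in>C4 \<gamma> \<kappa>. ?RN i2 i1 (rp B') \<and> ?RN j2 j1 (cp B')}"
    proof
      fix B' assume A: "B' \<in> Aloc \<gamma> \<kappa> B (i2,j2)"
      have m: "(i2,j2) \<in> sc B'" using Aloc_D(2)[OF A] .
      have r: "\<not> (fst (rp B') = i1 \<or> snd (rp B') = i1)"
      proof
        assume "fst (rp B') = i1 \<or> snd (rp B') = i1"
        then have "(i1,j2) \<in> sc B'" using m mem_sc[of i1 j2 B'] mem_sc[of i2 j2 B'] by auto
        then have "lexle (i2,j2) (i1,j2)" using Aloc_D(3)[OF A] inB by auto
        then show False using c unfolding lexle_def by simp
      qed
      have q: "\<not> (fst (cp B') = j1 \<or> snd (cp B') = j1)"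
      proof
        assume "fst (cp B') = j1 \<or> snd (cp B') = j1"
        then have "(i2,j1) \<in> sc B'" using m mem_sc[of i2 j1 B'] mem_sc[of i2 j2 B'] by auto
        then have "lexle (i2,j2) (i2,j1)" using Aloc_D(3)[OF A] inB by auto
        then show False using c unfolding lexle_def by simp
      qed
      show "B' \<in> {B'\<in>C4 \<gamma> \<kappa>. ?RN i2 i1 (rp B') \<and> ?RN j2 j1 (cp B')}"
        using Aloc_D(1)[OF A] m mem_sc[of i2 j2 B'] r q by auto
    qed
  qed (use card_pairs_contain_not c in auto)
  define a where "a = real \<gamma> - 1"
  define b where "b = real \<kappa> - 1"
  have ra: "real (\<gamma>-1) = a" "real (\<gamma>-2) = a - 1" using g unfolding a_def by auto
  have rb: "real (\<kappa>-1) = b" "real (\<kappa>-2) = b - 1" using g unfolding b_def by auto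
  have g1: "?g (i1,j1) \<le> 1 + \<mu>*(a*b)"
  proof -
    have "real (card (Aloc \<gamma> \<kappa> B (i1,j1))) \<le> a*b" using c1 ra rb
      by (metis of_nat_le_iff of_nat_mult)
    then show ?thesis using mu by (simp add: mult_left_mono)
  qed
  have g2: "?g (i1,j2) \<le> 1 + \<mu>*(a*(b-1))"
  proof -
    have "real (card (Aloc \<gamma> \<kappa> B (i1,j2))) \<le> a*(b-1)" using c2 ra rb
      by (metis of_nat_le_iff of_nat_mult)
    then show ?thesis using mu by (simp add: mult_left_mono)
  qed
  have g3: "?g (i2,j1) \<le> 1 + \<mu>*((a-1)*b)"
  proof -
    have "real (card (Aloc \<gamma> \<kappa> B (i2,j1))) \<le> (a-1)*b" using c3 ra rb
      by (metis of_nat_le_iff of_nat_mult)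
    then show ?thesis using mu by (simp add: mult_left_mono)
  qed
  have g4: "?g (i2,j2) \<le> 1 + \<mu>*((a-1)*(b-1))"
  proof -
    have "real (card (Aloc \<gamma> \<kappa> B (i2,j2))) \<le> (a-1)*(b-1)" using c4 ra rb
      by (metis of_nat_le_iff of_nat_mult)
    then show ?thesis using mu by (simp add: mult_left_mono)
  qed
  have gn: "\<And>e. 0 \<le> ?g e" using mu by simp
  have "(\<Prod>e\<in>sc B. ?g e) \<le> (1 + \<mu>*(a*b)) * ((1 + \<mu>*(a*(b-1))) * ((1 + \<mu>*((a-1)*b)) * (1 + \<mu>*((a-1)*(b-1)))))"
    unfolding prod4
    by (intro mult_mono g1 g2 g3 g4 gn mult_nonneg_nonneg) (use mu g in \<open>simp_all add: a_def b_def\<close>)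
  also have "\<dots> \<le> (1 + (a*b-1)*\<mu>) ^ 4"
    by (rule num4) (use g mu in \<open>simp_all add: a_def b_def\<close>)
  also have "a*b - 1 = real (\<gamma>*\<kappa>-\<gamma>-\<kappa>)"
  proof -
    have "\<gamma> + \<kappa> \<le> \<gamma>*\<kappa>"
    proof -
      have h1: "2*\<kappa> \<le> \<gamma>*\<kappa>" using g(1) by (simp add: mult_le_mono1)
      have h2: "2*\<gamma> \<le> \<gamma>*\<kappa>" using g(2) by (metis mult.commute mult_le_mono1)
      show ?thesis using h1 h2 by linarith
    qed
    then show ?thesis unfolding a_def b_def by (simp add: of_nat_diff algebra_simps)
  qed
  finally show ?thesis .
qed

lemma KP2:
  fixes p \<mu> :: real
  assumes p: "0 \<le> p" and mu: "0 \<le> \<mu>" and g: "\<gamma> \<ge> 2" "\<kappa> \<ge> 2" "\<gamma> + \<kappa> \<ge> 5"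
    and key: "p * (1 + real (\<gamma>*\<kappa>-\<gamma>-\<kappa>) * \<mu>) ^ 4 \<le> \<mu>"
    and I: "I \<subseteq> C4 \<gamma> \<kappa>" "indep I"
  shows "p ^ card I * (\<Sum>L\<in>insert {} (Valid (C4 \<gamma> \<kappa>) I). \<mu> ^ card L) \<le> \<mu> ^ card I"
proof -
  let ?x = "1 + real (\<gamma>*\<kappa>-\<gamma>-\<kappa>) * \<mu>"
  have "(\<Sum>L\<in>insert {} (Valid (C4 \<gamma> \<kappa>) I). \<mu> ^ card L) \<le> (\<Prod>B\<in>I. \<Prod>e\<in>sc B. (1 + \<mu> * card (Aloc \<gamma> \<kappa> B e)))"
    by (rule indep_sum_bound[OF I mu])
  also have "\<dots> \<le> (\<Prod>B\<in>I. ?x ^ 4)"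
  proof (rule prod_mono, rule conjI)
    fix B assume "B \<in> I"
    then have B: "B \<in> C4 \<gamma> \<kappa>" using I by blast
    show "0 \<le> (\<Prod>e\<in>sc B. 1 + \<mu> * card (Aloc \<gamma> \<kappa> B e))" using mu by (intro prod_nonneg) simp
    show "(\<Prod>e\<in>sc B. 1 + \<mu> * card (Aloc \<gamma> \<kappa> B e)) \<le> ?x ^ 4" by (rule Aloc_prod[OF B mu g])
  qed
  also have "\<dots> = (?x ^ 4) ^ card I" by simp
  finally have s: "(\<Sum>L\<in>insert {} (Valid (C4 \<gamma> \<kappa>) I). \<mu> ^ card L) \<le> (?x ^ 4) ^ card I" .
  have "p ^ card I * (\<Sum>L\<in>insert {} (Valid (C4 \<gamma> \<kappa>) I). \<mu> ^ card L) \<le> p ^ card I * (?x ^ 4) ^ card I"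
    by (rule mult_left_mono[OF s]) (simp add: p)
  also have "\<dots> = (p * ?x ^ 4) ^ card I" by (simp add: power_mult_distrib)
  also have "\<dots> \<le> \<mu> ^ card I" by (rule power_mono[OF key]) (use p mu in simp)
  finally show ?thesis .
qed


lemma mod_inj_lt:
  fixes x d d' Z :: nat
  assumes "d < Z" "d' < Z" "(x + d) mod Z = (x + d') mod Z"
  shows "d = d'"
proof (rule ccontr)
  assume ne: "d \<noteq> d'"
  { fix u v :: nat assume uv: "u < v" "v < Z" "(x + u) mod Z = (x + v) mod Z"
    then have "Z dvd (x + v) - (x + u)" using mod_eq_dvd_iff_nat[of "x + u" "x + v" Z] by simp
    then have "Z dvd v - u" by simp
    moreover have "0 < v - u" "v - u < Z" using uv by auto
    ultimately have False using nat_dvd_not_less by blast }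
  note aux = this
  show False
  proof (cases "d < d'")
    case True then show False using aux[of d d'] assms by simp
  next
    case False then have "d' < d" using ne by simp
    then show False using aux[of d' d] assms by simp
  qed
qed

definition Qs :: "nat \<Rightarrow> (nat \<times> nat \<times> nat) set" where
  "Qs m = {(a,b,c). a \<le> m \<and> b \<le> m \<and> c \<le> m \<and> a \<le> b + c \<and> b + c \<le> a + m}"

lemma finite_Qs: "finite (Qs m)"
proof -
  have "Qs m \<subseteq> {..m} \<times> {..m} \<times> {..m}" unfolding Qs_def by auto
  then show ?thesis using finite_subset by blast
qed

lemma card_c4set_le: "card (c4set m Z) \<le> card (Qs m) * Z ^ 3"
proof -
  let ?h = "\<lambda>(A::val,B::val,C::val,D::val). ((fst A, fst B, fst C), (snd A, snd B, snd C))"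
  have "card (c4set m Z) \<le> card (Qs m \<times> ({..<Z} \<times> {..<Z} \<times> {..<Z}))"
  proof (rule card_inj_on_le[of ?h])
    show "finite (Qs m \<times> ({..<Z} \<times> {..<Z} \<times> {..<Z}))" using finite_Qs by simp
    show "inj_on ?h (c4set m Z)"
    proof (rule inj_onI)
      fix X Y assume X: "X \<in> c4set m Z" and Y: "Y \<in> c4set m Z" and h: "?h X = ?h Y"
      obtain A B C D where Xd: "X = (A,B,C,D)" by (cases X)
      obtain A' B' C' D' where Yd: "Y = (A',B',C',D')" by (cases Y)
      have e: "A = A'" "B = B'" "C = C'" using h Xd Yd by (auto simp: prod_eq_iff)
      have X': "fst A + fst D = fst B + fst C" "(snd A + snd D) mod Z = (snd B + snd C) mod Z" "snd D < Z"
        using X Xd unfolding c4set_def Vs_def by auto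
      have Y': "fst A' + fst D' = fst B' + fst C'" "(snd A' + snd D') mod Z = (snd B' + snd C') mod Z" "snd D' < Z"
        using Y Yd unfolding c4set_def Vs_def by auto
      have "fst D = fst D'" using X'(1) Y'(1) e by simp
      moreover have "snd D = snd D'"
        by (rule mod_inj_lt[of _ _ _ "snd A"]) (use X' Y' e in auto)
      ultimately show "X = Y" using Xd Yd e by (simp add: prod_eq_iff)
    qed
    show "?h ` c4set m Z \<subseteq> Qs m \<times> ({..<Z} \<times> {..<Z} \<times> {..<Z})"
    proof
      fix y assume "y \<in> ?h ` c4set m Z"
      then obtain A B C D where X: "(A,B,C,D) \<in> c4set m Z" and y: "y = ?h (A,B,C,D)" by auto
      have "fst A + fst D = fst B + fst C" "fst D \<le> m" "fst A \<le> m" "fst B \<le> m" "fst C \<le> m"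
        "snd A < Z" "snd B < Z" "snd C < Z"
        using X unfolding c4set_def Vs_def by auto
      then show "y \<in> Qs m \<times> ({..<Z} \<times> {..<Z} \<times> {..<Z})" unfolding y Qs_def by auto
    qed
  qed
  also have "\<dots> = card (Qs m) * Z ^ 3" by (simp add: card_cartesian_product power3_eq_cube)
  finally show ?thesis .
qed

definition dd :: "nat \<Rightarrow> nat \<Rightarrow> nat" where "dd a b = (a - b) + (b - a)"

definition Gd :: "nat \<Rightarrow> nat" where
  "Gd m = (\<Sum>a\<le>m. \<Sum>b\<le>m. dd a b)"

lemma tri_sum: "2 * (\<Sum>b\<le>m. Suc m - b) = (m + 1) * (m + 2)"
proof (induction m)
  case 0 then show ?case by simp
next
  case (Suc m)
  have "(\<Sum>b\<le>Suc m. Suc (Suc m) - b) = (\<Sum>b\<le>m. Suc (Suc m) - b) + 1"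
    by (simp only: sum.atMost_Suc diff_self_eq_0)
  also have "(\<Sum>b\<le>m. Suc (Suc m) - b) = (\<Sum>b\<le>m. Suc (Suc m - b))"
    by (intro sum.cong refl) (simp add: Suc_diff_le)
  also have "\<dots> = (\<Sum>b\<le>m. Suc m - b) + (m + 1)" by (simp only: sum_Suc card_atMost)
  finally have "2 * (\<Sum>b\<le>Suc m. Suc (Suc m) - b) = 2 * (\<Sum>b\<le>m. Suc m - b) + 2 * (m + 2)" by simp
  then show ?case using Suc.IH by (simp add: algebra_simps)
qed

lemma dd_same: "dd a a = 0" by (simp add: dd_def)
lemma dd_Suc: "a \<le> m \<Longrightarrow> dd a (Suc m) = Suc m - a" by (simp add: dd_def)
lemma dd_Suc2: "b \<le> m \<Longrightarrow> dd (Suc m) b = Suc m - b" by (simp add: dd_def)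

lemma Gd_formula: "3 * Gd m = m * (m + 1) * (m + 2)"
proof (induction m)
  case 0 then show ?case by (simp add: Gd_def dd_def)
next
  case (Suc m)
  have "Gd (Suc m) = (\<Sum>a\<le>m. \<Sum>b\<le>Suc m. dd a b) + (\<Sum>b\<le>Suc m. dd (Suc m) b)"
    unfolding Gd_def by (simp only: sum.atMost_Suc)
  also have "(\<Sum>a\<le>m. \<Sum>b\<le>Suc m. dd a b) = (\<Sum>a\<le>m. (\<Sum>b\<le>m. dd a b) + (Suc m - a))"
    by (intro sum.cong refl) (simp only: sum.atMost_Suc dd_Suc atMost_iff)
  also have "\<dots> = Gd m + (\<Sum>a\<le>m. Suc m - a)" unfolding Gd_def by (simp only: sum.distrib)
  also have "(\<Sum>b\<le>Suc m. dd (Suc m) b) = (\<Sum>b\<le>m. Suc m - b)"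
  proof -
    have "(\<Sum>b\<le>Suc m. dd (Suc m) b) = (\<Sum>b\<le>m. dd (Suc m) b) + dd (Suc m) (Suc m)"
      by (simp only: sum.atMost_Suc)
    also have "(\<Sum>b\<le>m. dd (Suc m) b) = (\<Sum>b\<le>m. Suc m - b)"
      by (intro sum.cong refl) (simp add: dd_Suc2)
    finally show ?thesis by (simp add: dd_same)
  qed
  finally have "Gd (Suc m) = Gd m + 2 * (\<Sum>b\<le>m. Suc m - b)" by simp
  then have "3 * Gd (Suc m) = 3 * Gd m + 3 * ((m + 1) * (m + 2))" using tri_sum[of m] by simp
  then show ?case using Suc.IH by (simp add: algebra_simps)
qed

lemma card_inner:
  assumes "a \<le> m" "b \<le> m"
  shows "card {c. c \<le> m \<and> a \<le> b + c \<and> b + c \<le> a + m} = m + 1 - dd a b"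
proof -
  have "{c. c \<le> m \<and> a \<le> b + c \<and> b + c \<le> a + m} = {a - b .. m - (b - a)}"
    using assms by auto
  then show ?thesis using assms by (simp add: dd_def)
qed

lemma card_Qs: "card (Qs m) + Gd m = (m + 1) ^ 3"
proof -
  have "Qs m = Sigma {..m} (\<lambda>a. Sigma {..m} (\<lambda>b. {c. c \<le> m \<and> a \<le> b + c \<and> b + c \<le> a + m}))"
    unfolding Qs_def by auto
  then have "card (Qs m) = (\<Sum>a\<le>m. \<Sum>b\<le>m. card {c. c \<le> m \<and> a \<le> b + c \<and> b + c \<le> a + m})"
    by (simp add: card_SigmaI)
  also have "\<dots> = (\<Sum>a\<le>m. \<Sum>b\<le>m. m + 1 - dd a b)"
    by (intro sum.cong refl) (simp add: card_inner)
  finally have c: "card (Qs m) = (\<Sum>a\<le>m. \<Sum>b\<le>m. m + 1 - dd a b)" .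
  have "card (Qs m) + Gd m = (\<Sum>a\<le>m. \<Sum>b\<le>m. (m + 1 - dd a b) + dd a b)"
    unfolding c Gd_def by (simp only: sum.distrib)
  also have "\<dots> = (\<Sum>a\<le>m. \<Sum>b\<le>m. m + 1)"
    by (intro sum.cong refl) (auto simp: dd_def)
  also have "\<dots> = (m + 1) ^ 3" by (simp add: power3_eq_cube)
  finally show ?thesis .
qed

lemma frac_aux:
  fixes Q P x z :: real
  assumes "x > 0" "z > 0" "3 * Q = x * P"
  shows "Q * z ^ 3 / (x * z) ^ 4 = P / (3 * x ^ 3 * z)"
proof -
  have Q: "Q = x * P / 3" using assms(3) by simp
  show ?thesis unfolding Q using assms(1,2) by (simp add: field_simps power4_eq_xxxx power3_eq_cube)
qed

lemma p_bound:
  assumes Z: "Z \<ge> 1"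
  shows "real (card (c4set m Z)) / real (card (Vs m Z)) ^ 4 \<le>
         (2 * real m ^ 2 + 4 * real m + 3) / (3 * (real m + 1) ^ 3 * real Z)"
proof -
  have n: "3 * card (Qs m) + m * (m + 1) * (m + 2) = 3 * (m + 1) ^ 3"
    using card_Qs[of m] Gd_formula[of m] by linarith
  have "real (3 * card (Qs m) + m * (m + 1) * (m + 2)) = real (3 * (m + 1) ^ 3)"
    using n by (rule arg_cong)
  then have r: "3 * real (card (Qs m)) + real m * (real m + 1) * (real m + 2) = 3 * (real m + 1) ^ 3"
    by (simp add: algebra_simps)
  have q3: "3 * real (card (Qs m)) = (real m + 1) * (2 * real m ^ 2 + 4 * real m + 3)"
  proof -
    have "3 * (real m + 1) ^ 3 - real m * (real m + 1) * (real m + 2) = (real m + 1) * (2 * real m ^ 2 + 4 * real m + 3)"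
      by (simp add: algebra_simps power2_eq_square power3_eq_cube)
    then show ?thesis using r by linarith
  qed
  have c4: "real (card (c4set m Z)) \<le> real (card (Qs m)) * real Z ^ 3"
  proof -
    have "card (c4set m Z) \<le> card (Qs m) * Z ^ 3" by (rule card_c4set_le)
    then have "real (card (c4set m Z)) \<le> real (card (Qs m) * Z ^ 3)" by (rule of_nat_mono)
    then show ?thesis by simp
  qed
  have V: "real (card (Vs m Z)) = (real m + 1) * real Z" by (simp add: card_Vs algebra_simps)
  have "real (card (c4set m Z)) / real (card (Vs m Z)) ^ 4 \<le> real (card (Qs m)) * real Z ^ 3 / ((real m + 1) * real Z) ^ 4"
    unfolding V by (rule divide_right_mono[OF c4]) simp
  also have "\<dots> = (2 * real m ^ 2 + 4 * real m + 3) / (3 * (real m + 1) ^ 3 * real Z)"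
    by (rule frac_aux) (use Z q3 in auto)
  finally show ?thesis .
qed


lemma frac_le1: "(x::real) \<ge> 1 \<Longrightarrow> 1 / (3 * x) \<le> 1 / (3 * x - 1)"
  by (rule divide_left_mono) auto

lemma key1:
  fixes d :: nat and p :: real
  assumes d: "d \<ge> 1" and p: "0 \<le> p" "p \<le> real d ^ d / real (Suc d) ^ Suc d"
  shows "p * (1 + 1 / real d) ^ Suc d \<le> 1 / real d"
proof -
  have dp: "real d > 0" using d by simp
  have e1: "1 + 1 / real d = real (Suc d) / real d" using dp by (simp add: field_simps)
  have X: "(1 + 1 / real d) ^ Suc d = real (Suc d) ^ Suc d / real d ^ Suc d"
    unfolding e1 by (rule power_divide)
  have X0: "0 \<le> (1 + 1 / real d) ^ Suc d" by simp
  have "p * (1 + 1 / real d) ^ Suc d \<le> (real d ^ d / real (Suc d) ^ Suc d) * (1 + 1 / real d) ^ Suc d"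
    by (rule mult_right_mono[OF p(2) X0])
  also have "\<dots> = real d ^ d / real d ^ Suc d"
  proof -
    have b: "real (Suc d) ^ Suc d \<noteq> 0" by simp
    have c: "real d ^ Suc d \<noteq> 0" using dp by simp
    show ?thesis unfolding X using b c by simp
  qed
  also have "\<dots> = 1 / real d" using dp by (simp add: field_simps)
  finally show ?thesis .
qed

lemma key2:
  fixes n :: nat and p :: real
  assumes n: "n \<ge> 1" and p: "0 \<le> p" "p \<le> 27 / (256 * real n)"
  shows "p * (1 + real n * (1 / (3 * real n))) ^ 4 \<le> 1 / (3 * real n)"
proof -
  have np: "real n > 0" using n by simp
  have e: "1 + real n * (1 / (3 * real n)) = 4 / 3" using np by (simp add: field_simps)
  have "p * (4 / 3) ^ 4 \<le> 27 / (256 * real n) * (4 / 3) ^ 4"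
    by (rule mult_right_mono[OF p(2)]) simp
  also have "\<dots> = 1 / (3 * real n)" using np by (simp add: field_simps power4_eq_xxxx)
  finally show ?thesis unfolding e .
qed

theorem corollary2:
  fixes \<gamma> \<kappa> m L Z :: nat and cs :: "cand list"
  assumes "\<gamma> \<ge> 2" and "\<kappa> \<ge> 2" and "L \<ge> m + 1" and "Z \<ge> 1"
    and "\<gamma> * \<kappa> > \<gamma> + \<kappa>"
    and "distinct cs" and "set cs = C4 \<gamma> \<kappa>"
    and "(2 * real m ^ 2 + 4 * real m + 3) / (3 * (real m + 1) ^ 3 * real Z) \<le>
         max (real ((2*\<gamma>-3)*(2*\<kappa>-3) - 1) ^ ((2*\<gamma>-3)*(2*\<kappa>-3) - 1)
                / real ((2*\<gamma>-3)*(2*\<kappa>-3)) ^ ((2*\<gamma>-3)*(2*\<kappa>-3)))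
             (27 / (256 * real (\<gamma>*\<kappa> - \<gamma> - \<kappa>)))"
  shows "(AE \<omega> in table_space m Z. mt_terminates Z cs \<omega> \<and>
            (\<forall>c\<in>C4 \<gamma> \<kappa>. \<not> active Z (mt_output Z cs \<omega>) c))
       \<and> (\<Sum>c\<in>C4 \<gamma> \<kappa>. \<integral>\<^sup>+ \<omega>. resample_count Z cs \<omega> c \<partial>table_space m Z)
           \<le> ennreal (if real ((2*\<gamma>-3)*(2*\<kappa>-3) - 1) ^ ((2*\<gamma>-3)*(2*\<kappa>-3) - 1)
                          / real ((2*\<gamma>-3)*(2*\<kappa>-3)) ^ ((2*\<gamma>-3)*(2*\<kappa>-3))
                        > 27 / (256 * real (\<gamma>*\<kappa> - \<gamma> - \<kappa>))
                     then real (\<gamma> choose 2) * real (\<kappa> choose 2)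
                          / (real ((2*\<gamma>-3)*(2*\<kappa>-3)) - 2)
                     else real (\<gamma> choose 2) * real (\<kappa> choose 2)
                          / (3 * real (\<gamma>*\<kappa> - \<gamma> - \<kappa>) - 1))"
proof -
  let ?D = "(2*\<gamma>-3)*(2*\<kappa>-3)"
  let ?N = "\<gamma>*\<kappa> - \<gamma> - \<kappa>"
  let ?I = "real (?D - 1) ^ (?D - 1) / real ?D ^ ?D"
  let ?II = "27 / (256 * real ?N)"
  have Z: "Z \<ge> 1" using assms(4) .
  have g: "\<gamma> \<ge> 2" "\<kappa> \<ge> 2" using assms(1,2) .
  have g5: "\<gamma> + \<kappa> \<ge> 5"
  proof (rule ccontr)
    assume "\<not> \<gamma> + \<kappa> \<ge> 5"
    then have "\<gamma> = 2 \<and> \<kappa> = 2" using g by linarith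
    then show False using assms(5) by simp
  qed
  have D3: "?D \<ge> 3"
  proof (cases "\<gamma> \<ge> 3")
    case True
    then have "2*\<gamma>-3 \<ge> 3" "2*\<kappa>-3 \<ge> 1" using g by auto
    then show ?thesis by (metis mult_le_mono nat_mult_1_right)
  next
    case False
    then have "\<kappa> \<ge> 3" "2*\<gamma>-3 \<ge> 1" using g g5 by auto
    then have "2*\<kappa>-3 \<ge> 3" "2*\<gamma>-3 \<ge> 1" by auto
    then show ?thesis by (metis mult_le_mono nat_mult_1)
  qed
  have N1: "?N \<ge> 1" using assms(5) by simp
  define p where "p = real (card (c4set m Z)) / real (card (Vs m Z)) ^ 4"
  have p0: "0 \<le> p" unfolding p_def by simp
  have p_alt: "p = real (card (c4set m Z)) / real (card (Vs m Z) ^ 4)" unfolding p_def by simp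
  have pmax: "p \<le> max ?I ?II"
    unfolding p_def using p_bound[OF Z, of m] assms(8) by linarith
  have CC: "real (card (C4 \<gamma> \<kappa>)) \<le> real (\<gamma> choose 2) * real (\<kappa> choose 2)"
    using card_C4[of \<gamma> \<kappa>] by (metis of_nat_le_iff of_nat_mult)
  show ?thesis
  proof (cases "?I > ?II")
    case True
    define d where "d = ?D - 1"
    have Dd: "?D = Suc d" unfolding d_def using D3 by simp
    have d2: "d \<ge> 2" unfolding d_def using D3 by simp
    define \<mu> where "\<mu> = 1 / real d"
    have mu0: "0 \<le> \<mu>" unfolding \<mu>_def by simp
    have e: "?D - 1 = d" unfolding d_def ..
    have Ie: "?I = real d ^ d / real (Suc d) ^ Suc d" by (simp only: e) (simp only: Dd)
    have "p \<le> ?I" using pmax True by (simp add: max_def)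
    then have pI: "p \<le> real d ^ d / real (Suc d) ^ Suc d" unfolding Ie .
    have key: "p * (1 + \<mu>) ^ ?D \<le> \<mu>"
      unfolding \<mu>_def Dd by (rule key1) (use d2 p0 pI in auto)
    have KP: "\<And>I. I \<subseteq> C4 \<gamma> \<kappa> \<Longrightarrow> indep I \<Longrightarrow>
       p ^ card I * (\<Sum>L\<in>insert {} (Valid (C4 \<gamma> \<kappa>) I). \<mu> ^ card L) \<le> \<mu> ^ card I"
      by (rule KP1[OF p0 mu0 key])
    have M: "(AE \<omega> in table_space m Z. mt_terminates Z cs \<omega> \<and> (\<forall>c\<in>C4 \<gamma> \<kappa>. \<not> active Z (mt_output Z cs \<omega>) c))
       \<and> (\<Sum>c\<in>C4 \<gamma> \<kappa>. \<integral>\<^sup>+ \<omega>. resample_count Z cs \<omega> c \<partial>table_space m Z) \<le> ennreal (card (C4 \<gamma> \<kappa>) * \<mu>)"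
      by (rule MT_main[OF Z assms(7) p_alt mu0 KP])
    have "real (card (C4 \<gamma> \<kappa>)) * \<mu> \<le> real (\<gamma> choose 2) * real (\<kappa> choose 2) / (real ?D - 2)"
    proof -
      have r3: "(3::real) \<le> real ?D" using of_nat_mono[OF D3] by simp
      have pos: "real ?D - 2 > 0" using r3 by linarith
      have "\<mu> \<le> 1 / (real ?D - 2)" unfolding \<mu>_def using d2 Dd pos by (simp add: frac_le)
      then have "real (card (C4 \<gamma> \<kappa>)) * \<mu> \<le> real (\<gamma> choose 2) * real (\<kappa> choose 2) * (1 / (real ?D - 2))"
        by (intro mult_mono CC) (use mu0 pos in auto)
      then show ?thesis by simp
    qed
    then have "ennreal (card (C4 \<gamma> \<kappa>) * \<mu>) \<le> ennreal (real (\<gamma> choose 2) * real (\<kappa> choose 2) / (real ?D - 2))"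
      by (rule ennreal_leI)
    then show ?thesis using M True by (simp only: if_P) (meson order_trans)
  next
    case False
    define \<mu> where "\<mu> = 1 / (3 * real ?N)"
    have mu0: "0 \<le> \<mu>" unfolding \<mu>_def by simp
    have pII: "p \<le> ?II" using pmax False by simp
    have key: "p * (1 + real ?N * \<mu>) ^ 4 \<le> \<mu>"
      unfolding \<mu>_def by (rule key2) (use N1 p0 pII in auto)
    have KP: "\<And>I. I \<subseteq> C4 \<gamma> \<kappa> \<Longrightarrow> indep I \<Longrightarrow>
       p ^ card I * (\<Sum>L\<in>insert {} (Valid (C4 \<gamma> \<kappa>) I). \<mu> ^ card L) \<le> \<mu> ^ card I"
      by (rule KP2[OF p0 mu0 g g5 key])
    have M: "(AE \<omega> in table_space m Z. mt_terminates Z cs \<omega> \<and> (\<forall>c\<in>C4 \<gamma> \<kappa>. \<not> active Z (mt_output Z cs \<omega>) c))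
       \<and> (\<Sum>c\<in>C4 \<gamma> \<kappa>. \<integral>\<^sup>+ \<omega>. resample_count Z cs \<omega> c \<partial>table_space m Z) \<le> ennreal (card (C4 \<gamma> \<kappa>) * \<mu>)"
      by (rule MT_main[OF Z assms(7) p_alt mu0 KP])
    have "real (card (C4 \<gamma> \<kappa>)) * \<mu> \<le> real (\<gamma> choose 2) * real (\<kappa> choose 2) / (3 * real ?N - 1)"
    proof -
      have r0: "real (1::nat) \<le> real ?N" by (rule of_nat_mono[OF N1])
      have r1: "(1::real) \<le> real ?N" using r0 by (simp only: of_nat_1)
      have pos: "3 * real ?N - 1 > 0" using r1 by linarith
      have "\<mu> \<le> 1 / (3 * real ?N - 1)" unfolding \<mu>_def by (rule frac_le1[OF r1])
      then have "real (card (C4 \<gamma> \<kappa>)) * \<mu> \<le> real (\<gamma> choose 2) * real (\<kappa> choose 2) * (1 / (3 * real ?N - 1))"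
        by (intro mult_mono CC) (use mu0 pos in auto)
      then show ?thesis by simp
    qed
    then have "ennreal (card (C4 \<gamma> \<kappa>) * \<mu>) \<le> ennreal (real (\<gamma> choose 2) * real (\<kappa> choose 2) / (3 * real ?N - 1))"
      by (rule ennreal_leI)
    then show ?thesis using M False by (simp only: if_not_P) (meson order_trans)
  qed
qed


end
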